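(* For every $\theta=(\theta_1,\theta_2)=((K_1,L_1),(K_2,L_2))\in\Theta$ and $j=1,2$, $$\nabla_{K_j}C(\theta_1,\theta_2)=2E^{y,j}_{K_1,K_2}\Sigma^y_{K_1,K_2},\qquad \nabla_{L_j}C(\theta_1,\theta_2)=2E^{z,j}_{L_1,L_2}\Sigma^z_{L_1,L_2}.$$
   Context: Fix $d,\ell\ge1$, $\gamma\in[0,1)$, $A,\bar A\in\mathbb R^{d\times d}$, $B_1,\bar B_1,B_2,\bar B_2\in\mathbb R^{d\times\ell}$, symmetric $Q,\bar Q\in\mathbb R^{d\times d}$, symmetric $R_1,\bar R_1,R_2,\bar R_2\in\mathbb R^{\ell\times\ell}$; $\tilde A=A+\bar A$, $\tilde B_i=B_i+\bar B_i$, $\tilde Q=Q+\bar Q$, $\tilde R_i=R_i+\bar R_i$. Noises: $(\epsilon^j_t)_{t\ge1}$ i.i.d. mean-zero square integrable in $\mathbb R^d$, $\epsilon^j_0\sim\mu^j_0$ square integrable, $j=0,1$, all independent. $\Theta$ is the set of $((K_1,L_1),(K_2,L_2))\in(\mathbb R^{\ell\times d})^4$ with $\gamma\|A-B_1K_1+B_2K_2\|^2<1$ and $\gamma\|\tilde A-\tilde B_1L_1+\tilde B_2L_2\|^2<1$. Processes: $y_{t+1}=(A-B_1K_1+B_2K_2)y_t+\epsilon^1_{t+1}$, $z_{t+1}=(\tilde A-\tilde B_1L_1+\tilde B_2L_2)z_t+\epsilon^0_{t+1}$. $C_y(K_1,K_2,\tilde y)=\mathbb E[\sum_t\gamma^t(y_t^\top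 Qy_t+y_t^\top K_1^\top R_1K_1y_t-y_t^\top K_2^\top R_2K_2y_t)\mid y_0=\tilde y]$, $C_z(L_1,L_2,\tilde z)=\mathbb E[\sum_t\gamma^t(z_t^\top\tilde Qz_t+z_t^\top L_1^\top\tilde R_1L_1z_t-z_t^\top L_2^\top\tilde R_2L_2z_t)\mid z_0=\tilde z]$, and $C(\theta_1,\theta_2)=\mathbb E_{\tilde y\sim\mu^1_0}[C_y(K_1,K_2,\tilde y)]+\mathbb E_{\tilde z\sim\mu^0_0}[C_z(L_1,L_2,\tilde z)]$. $P^y_{K_1,K_2}$ is the solution of $P=Q+K_1^\top R_1K_1-K_2^\top R_2K_2+\gamma(A-B_1K_1+B_2K_2)^\top P(A-B_1K_1+B_2K_2)$ and $P^z_{L_1,L_2}$ the solution of $P=\tilde Q+L_1^\top\tilde R_1L_1-L_2^\top\tilde R_2L_2+\gamma(\tilde A-\tilde B_1L_1+\tilde B_2L_2)^\top P(\tilde A-\tilde B_1L_1+\tilde B_2L_2)$. Writing $P=P^y_{K_1,K_2}$: $E^{y,1}_{K_1,K_2}=-\gamma B_1^\top PA+(R_1+\gamma B_1^\top PB_1)K_1-\gamma B_1^\top PB_2K_2$ and $E^{y,2}_{K_1,K_2}=\gamma B_2^\top PA-\gamma B_2^\top PB_1K_1+(-R_2+\gamma B_2^\top PB_2)K_2$; $E^{z,j}_{L_1,L_2}$ is defined identically with $(A,B_i,R_i,P^y_{K_1,K_2},K_i)$ replaced by $(\tilde A,\tilde B_i,\tilde R_i,P^z_{L_1,L_2},L_i)$.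 $\Sigma^y_{K_1,K_2}=\mathbb E[\sum_{t\ge0}\gamma^ty_ty_t^\top]$ with $y_0\sim\mu^1_0$, and $\Sigma^z_{L_1,L_2}=\mathbb E[\sum_{t\ge0}\gamma^tz_tz_t^\top]$ with $z_0\sim\mu^0_0$. $\nabla_{K_j}C$ denotes the $\ell\times d$ matrix of partial derivatives of $C$ with respect to the entries of $K_j$ (similarly for $L_j$). *)

theory Defs
  imports "HOL-Probability.Probability"
begin

text \<open>Matrices: a d x d matrix is real^'d^'d, a d x l matrix is real^'l^'d,
an l x d matrix is real^'d^'l (rows indexed by the outer index).\<close>

definition clmat :: "real^'d^'d \<Rightarrow> real^'l^'d \<Rightarrow> real^'l^'d \<Rightarrow> real^'d^'l \<Rightarrow> real^'d^'l \<Rightarrow> real^'d^'d" where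
  "clmat A B1 B2 K1 K2 = A - B1 ** K1 + B2 ** K2"

definition opnorm :: "real^'n^'m \<Rightarrow> real" where
  "opnorm M = onorm (\<lambda>x. M *v x)"

definition Theta ::
  "real \<Rightarrow> real^'d^'d \<Rightarrow> real^'d^'d \<Rightarrow> real^'l^'d \<Rightarrow> real^'l^'d \<Rightarrow> real^'l^'d \<Rightarrow> real^'l^'d
   \<Rightarrow> (((real^'d^'l) \<times> (real^'d^'l)) \<times> ((real^'d^'l) \<times> (real^'d^'l))) set" where
  "Theta \<gamma> A Ab B1 B1b B2 B2b =
     {((K1,L1),(K2,L2)). \<gamma> * (opnorm (clmat A B1 B2 K1 K2))\<^sup>2 < 1 \<and>
        \<gamma> * (opnorm (clmat (A + Ab) (B1 + B1b) (B2 + B2b) L1 L2))\<^sup>2 < 1}"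

primrec traj :: "real^'d^'d \<Rightarrow> (nat \<Rightarrow> 'a \<Rightarrow> real^'d) \<Rightarrow> ('a \<Rightarrow> real^'d) \<Rightarrow> nat \<Rightarrow> 'a \<Rightarrow> real^'d" where
  "traj Mc eps x0 0 = x0"
| "traj Mc eps x0 (Suc t) = (\<lambda>\<omega>. Mc *v traj Mc eps x0 t \<omega> + eps (Suc t) \<omega>)"

definition stage_cost :: "real^'d^'d \<Rightarrow> real^'l^'l \<Rightarrow> real^'l^'l \<Rightarrow> real^'d^'l \<Rightarrow> real^'d^'l \<Rightarrow> real^'d \<Rightarrow> real" where
  "stage_cost Q R1 R2 K1 K2 x =
     x \<bullet> (Q *v x) + (K1 *v x) \<bullet> (R1 *v (K1 *v x)) - (K2 *v x) \<bullet> (R2 *v (K2 *v x))"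

definition cond_cost ::
  "'a measure \<Rightarrow> (nat \<Rightarrow> 'a \<Rightarrow> real^'d) \<Rightarrow> real \<Rightarrow> real^'d^'d \<Rightarrow> real^'l^'d \<Rightarrow> real^'l^'d
   \<Rightarrow> real^'d^'d \<Rightarrow> real^'l^'l \<Rightarrow> real^'l^'l \<Rightarrow> real^'d^'l \<Rightarrow> real^'d^'l \<Rightarrow> real^'d \<Rightarrow> real" where
  "cond_cost M eps \<gamma> A B1 B2 Q R1 R2 K1 K2 x0 =
     (\<integral>\<omega>. (\<Sum>t. \<gamma> ^ t * stage_cost Q R1 R2 K1 K2 (traj (clmat A B1 B2 K1 K2) eps (\<lambda>_. x0) t \<omega>)) \<partial>M)"

definition init_cost ::
  "'a measure \<Rightarrow> (nat \<Rightarrow> 'a \<Rightarrow> real^'d) \<Rightarrow> real \<Rightarrow> real^'d^'d \<Rightarrow> real^'l^'d \<Rightarrow> real^'l^'d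
   \<Rightarrow> real^'d^'d \<Rightarrow> real^'l^'l \<Rightarrow> real^'l^'l \<Rightarrow> real^'d^'l \<Rightarrow> real^'d^'l \<Rightarrow> real" where
  "init_cost M eps \<gamma> A B1 B2 Q R1 R2 K1 K2 =
     (\<integral>x0. cond_cost M eps \<gamma> A B1 B2 Q R1 R2 K1 K2 x0 \<partial>(distr M borel (eps 0)))"

definition total_cost ::
  "'a measure \<Rightarrow> (nat \<Rightarrow> 'a \<Rightarrow> real^'d) \<Rightarrow> (nat \<Rightarrow> 'a \<Rightarrow> real^'d) \<Rightarrow> real
   \<Rightarrow> real^'d^'d \<Rightarrow> real^'d^'d \<Rightarrow> real^'l^'d \<Rightarrow> real^'l^'d \<Rightarrow> real^'l^'d \<Rightarrow> real^'l^'d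
   \<Rightarrow> real^'d^'d \<Rightarrow> real^'d^'d \<Rightarrow> real^'l^'l \<Rightarrow> real^'l^'l \<Rightarrow> real^'l^'l \<Rightarrow> real^'l^'l
   \<Rightarrow> ((real^'d^'l) \<times> (real^'d^'l)) \<Rightarrow> ((real^'d^'l) \<times> (real^'d^'l)) \<Rightarrow> real" where
  "total_cost M eps1 eps0 \<gamma> A Ab B1 B1b B2 B2b Q Qb R1 R1b R2 R2b \<theta>1 \<theta>2 =
     (case \<theta>1 of (K1, L1) \<Rightarrow> case \<theta>2 of (K2, L2) \<Rightarrow>
        init_cost M eps1 \<gamma> A B1 B2 Q R1 R2 K1 K2
      + init_cost M eps0 \<gamma> (A + Ab) (B1 + B1b) (B2 + B2b) (Q + Qb) (R1 + R1b) (R2 + R2b) L1 L2)"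

definition Pmat :: "real \<Rightarrow> real^'d^'d \<Rightarrow> real^'l^'d \<Rightarrow> real^'l^'d
   \<Rightarrow> real^'d^'d \<Rightarrow> real^'l^'l \<Rightarrow> real^'l^'l \<Rightarrow> real^'d^'l \<Rightarrow> real^'d^'l \<Rightarrow> real^'d^'d" where
  "Pmat \<gamma> A B1 B2 Q R1 R2 K1 K2 =
     (THE P. P = Q + transpose K1 ** R1 ** K1 - transpose K2 ** R2 ** K2
                 + \<gamma> *\<^sub>R (transpose (clmat A B1 B2 K1 K2) ** P ** clmat A B1 B2 K1 K2))"

definition Emat1 :: "real \<Rightarrow> real^'d^'d \<Rightarrow> real^'l^'d \<Rightarrow> real^'l^'d
   \<Rightarrow> real^'d^'d \<Rightarrow> real^'l^'l \<Rightarrow> real^'l^'l \<Rightarrow> real^'d^'l \<Rightarrow> real^'d^'l \<Rightarrow> real^'d^'l" where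
  "Emat1 \<gamma> A B1 B2 Q R1 R2 K1 K2 =
     (let P = Pmat \<gamma> A B1 B2 Q R1 R2 K1 K2 in
       - (\<gamma> *\<^sub>R (transpose B1 ** P ** A)) + (R1 + \<gamma> *\<^sub>R (transpose B1 ** P ** B1)) ** K1
       - \<gamma> *\<^sub>R (transpose B1 ** P ** B2 ** K2))"

definition Emat2 :: "real \<Rightarrow> real^'d^'d \<Rightarrow> real^'l^'d \<Rightarrow> real^'l^'d
   \<Rightarrow> real^'d^'d \<Rightarrow> real^'l^'l \<Rightarrow> real^'l^'l \<Rightarrow> real^'d^'l \<Rightarrow> real^'d^'l \<Rightarrow> real^'d^'l" where
  "Emat2 \<gamma> A B1 B2 Q R1 R2 K1 K2 =
     (let P = Pmat \<gamma> A B1 B2 Q R1 R2 K1 K2 in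
       \<gamma> *\<^sub>R (transpose B2 ** P ** A) - \<gamma> *\<^sub>R (transpose B2 ** P ** B1 ** K1)
       + (- R2 + \<gamma> *\<^sub>R (transpose B2 ** P ** B2)) ** K2)"

definition outer :: "real^'d \<Rightarrow> real^'d^'d" where
  "outer x = (\<chi> i j. x $ i * x $ j)"

definition Sigma_mat :: "'a measure \<Rightarrow> (nat \<Rightarrow> 'a \<Rightarrow> real^'d) \<Rightarrow> real \<Rightarrow> real^'d^'d \<Rightarrow> real^'d^'d" where
  "Sigma_mat M eps \<gamma> Mc = (\<integral>\<omega>. (\<Sum>t. (\<gamma> ^ t) *\<^sub>R outer (traj Mc eps (eps 0) t \<omega>)) \<partial>M)"

definition munit :: "'l \<Rightarrow> 'd \<Rightarrow> real^'d^'l" where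
  "munit i k = (\<chi> a b. if a = i \<and> b = k then 1 else 0)"

definition is_matrix_gradient :: "(real^'d^'l \<Rightarrow> real) \<Rightarrow> real^'d^'l \<Rightarrow> real^'d^'l \<Rightarrow> bool" where
  "is_matrix_gradient f K G \<longleftrightarrow>
     (\<forall>i k. ((\<lambda>s. f (K + s *\<^sub>R munit i k)) has_real_derivative (G $ i $ k)) (at 0))"

definition noise_ok :: "'a measure \<Rightarrow> (nat \<Rightarrow> 'a \<Rightarrow> real^'d) \<Rightarrow> (nat \<Rightarrow> 'a \<Rightarrow> real^'d) \<Rightarrow> bool" where
  "noise_ok M eps1 eps0 \<longleftrightarrow>
     prob_space M \<and>
     prob_space.indep_vars M (\<lambda>_. borel) (\<lambda>(j::bool, t::nat). if j then eps1 t else eps0 t) UNIV \<and>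
     (\<forall>eps\<in>{eps1, eps0}.
        (\<forall>t. eps t \<in> borel_measurable M \<and> integrable M (\<lambda>\<omega>. (norm (eps t \<omega>))\<^sup>2)) \<and>
        (\<forall>t\<ge>1. distr M borel (eps t) = distr M borel (eps 1) \<and> (\<integral>\<omega>. eps t \<omega> \<partial>M) = 0))"

end

theory Submission
  imports Defs
begin

lemma summable_nat_pow:
  fixes b :: real assumes "0 \<le> b" "b < 1"
  shows "summable (\<lambda>n. real n * b ^ n)"
proof -
  have "summable (\<lambda>n. diffs (\<lambda>_. 1::real) n * b ^ n)"
    by (rule termdiff_converges[where K=1]) (use assms in \<open>auto intro!: summable_geometric\<close>)
  then have s: "summable (\<lambda>n. real (Suc n) * b ^ n)" by (simp add: diffs_def)
  show ?thesis
    by (rule summable_comparison_test[OF _ s]) (use assms in \<open>auto intro!: exI[of _ 0] mult_right_mono\<close>)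
qed

lemma mv_opnorm: "norm (M *v v) \<le> opnorm M * norm v"
  unfolding opnorm_def by (rule onorm) simp

lemma opnorm_nonneg: "0 \<le> opnorm M"
  unfolding opnorm_def by (rule onorm_pos_le) simp

lemma transpose_bound:
  fixes M :: "real^'n^'m"
  assumes c: "\<And>u. norm (M *v u) \<le> c * norm u" and c0: "0 \<le> c"
  shows "norm (transpose M *v v) \<le> c * norm v"
proof -
  let ?w = "transpose M *v v"
  have "norm ?w ^ 2 = ?w \<bullet> ?w" by (simp add: power2_norm_eq_inner)
  also have "\<dots> = v \<bullet> (M *v ?w)" by (simp add: dot_lmul_matrix)
  also have "\<dots> \<le> norm v * norm (M *v ?w)" by (rule Cauchy_Schwarz_ineq2[THEN order_trans[OF abs_ge_self]])
  also have "\<dots> \<le> norm v * (c * norm ?w)" by (rule mult_left_mono[OF c]) simp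
  finally have *: "norm ?w * norm ?w \<le> (c * norm v) * norm ?w" by (simp add: power2_eq_square algebra_simps)
  show ?thesis
  proof (cases "norm ?w = 0")
    case True
    then show ?thesis using c0 by simp
  next
    case False
    then show ?thesis using * by (simp add: mult_le_cancel_right)
  qed
qed

lemma norm_sq_rows: "(norm (X::real^'n^'m))^2 = (\<Sum>i\<in>UNIV. (norm (X$i))^2)"
  by (simp add: power2_norm_eq_inner inner_vec_def)

lemma norm_sq_entries: "(norm (x::real^'n))^2 = (\<Sum>i\<in>UNIV. (x$i)^2)"
  unfolding norm_vec_def L2_set_def by (simp add: sum_nonneg)

lemma row_mult_transpose: "(X ** transpose (N::real^'n^'m)) $ i = N *v (X $ i)"
  by (simp add: vec_eq_iff matrix_matrix_mult_def matrix_vector_mult_def transpose_def mult.commute)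

lemma norm_transpose: "norm (transpose (X::real^'n^'m)) = norm X"
proof -
  have "(norm (transpose X))^2 = (norm X)^2"
    unfolding norm_sq_rows norm_sq_entries transpose_def
    by (simp, subst sum.swap, simp)
  then show ?thesis by (simp add: power2_eq_iff_nonneg)
qed

lemma norm_mult_transpose_le:
  fixes N :: "real^'n^'m" and X :: "real^'n^'p"
  assumes c: "\<And>v. norm (N *v v) \<le> c * norm v" and c0: "0 \<le> c"
  shows "norm (X ** transpose N) \<le> c * norm X"
proof -
  have "(norm (X ** transpose N))^2 = (\<Sum>i\<in>UNIV. (norm (N *v (X$i)))^2)"
    unfolding norm_sq_rows row_mult_transpose ..
  also have "\<dots> \<le> (\<Sum>i\<in>UNIV. (c * norm (X$i))^2)"
    by (rule sum_mono, rule power_mono[OF c]) simp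
  also have "\<dots> = (c * norm X)^2"
    by (simp only: power_mult_distrib norm_sq_rows[of X] sum_distrib_left)
  finally show ?thesis by (rule power2_le_imp_le) (use c0 in simp)
qed

lemma norm_mult_left_le:
  fixes N :: "real^'n^'m" and X :: "real^'p^'n"
  assumes c: "\<And>v. norm (N *v v) \<le> c * norm v" and c0: "0 \<le> c"
  shows "norm (N ** X) \<le> c * norm X"
proof -
  have "norm (N ** X) = norm (transpose X ** transpose N)"
    by (metis matrix_transpose_mul norm_transpose)
  also have "\<dots> \<le> c * norm (transpose X)" by (rule norm_mult_transpose_le[OF c c0])
  finally show ?thesis by (simp add: norm_transpose)
qed

lemma norm_cong_le:
  fixes N :: "real^'n^'m" and X :: "real^'n^'n"
  assumes c: "\<And>v. norm (N *v v) \<le> c * norm v" and c0: "0 \<le> c"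
  shows "norm (N ** X ** transpose N) \<le> c^2 * norm X"
proof -
  have "norm (N ** X ** transpose N) \<le> c * norm (N ** X)" by (rule norm_mult_transpose_le[OF c c0])
  also have "\<dots> \<le> c * (c * norm X)" by (rule mult_left_mono[OF norm_mult_left_le[OF c c0] c0])
  finally show ?thesis by (simp add: power2_eq_square mult.assoc)
qed

lemma mat_radd: "((A::real^'n^'m) + B) ** (C::real^'p^'n) = A ** C + B ** C"
  by (simp add: matrix_matrix_mult_def vec_eq_iff sum.distrib algebra_simps)
lemma mat_rdiff: "((A::real^'n^'m) - B) ** (C::real^'p^'n) = A ** C - B ** C"
  by (simp add: matrix_matrix_mult_def vec_eq_iff sum_subtractf algebra_simps)
lemma mat_ldiff: "(A::real^'n^'m) ** ((B::real^'p^'n) - C) = A ** B - A ** C"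
  by (simp add: matrix_matrix_mult_def vec_eq_iff sum_subtractf algebra_simps)
lemma mat_rneg: "(- (A::real^'n^'m)) ** (C::real^'p^'n) = - (A ** C)"
  by (simp add: matrix_matrix_mult_def vec_eq_iff sum_negf)
lemma mat_lneg: "(A::real^'n^'m) ** (- (C::real^'p^'n)) = - (A ** C)"
  by (simp add: matrix_matrix_mult_def vec_eq_iff sum_negf)
lemma mat_r0: "(A::real^'n^'m) ** (0::real^'p^'n) = 0"
  by (simp add: matrix_matrix_mult_def vec_eq_iff)
lemma mat_l0: "(0::real^'n^'m) ** (A::real^'p^'n) = 0"
  by (simp add: matrix_matrix_mult_def vec_eq_iff)
lemma transpose_add: "transpose ((A::real^'n^'m) + B) = transpose A + transpose B"
  by (simp add: transpose_def vec_eq_iff)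
lemma transpose_diff: "transpose ((A::real^'n^'m) - B) = transpose A - transpose B"
  by (simp add: transpose_def vec_eq_iff)
lemma transpose_neg: "transpose (- (A::real^'n^'m)) = - transpose A"
  by (simp add: transpose_def vec_eq_iff)
lemma transpose_zero: "transpose (0::real^'n^'m) = 0"
  by (simp add: transpose_def vec_eq_iff)

lemma linear_sandwich: "linear (\<lambda>X::real^'p^'n. (A::real^'n^'m) ** X ** (B::real^'q^'p))"
  by (rule linearI) (simp_all add: matrix_add_ldistrib mat_radd matrix_scalar_ac scalar_matrix_assoc)

lemma bl_sandwich: "bounded_linear (\<lambda>X::real^'p^'n. (A::real^'n^'m) ** X ** (B::real^'q^'p))"
  using linear_sandwich linear_conv_bounded_linear by blast

primrec lyrec :: "real^'n^'n \<Rightarrow> real^'n^'n \<Rightarrow> real^'n^'n \<Rightarrow> nat \<Rightarrow> real^'n^'n" where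
  "lyrec N W V 0 = V"
| "lyrec N W V (Suc t) = N ** lyrec N W V t ** transpose N + W"

lemma lyrec_bound:
  assumes c: "\<And>v. norm (N *v v) \<le> c * norm v" and c0: "0 \<le> c"
    and g0: "0 \<le> \<gamma>" and b1: "\<gamma> * c^2 \<le> b" and b2: "\<gamma> \<le> b"
  shows "\<gamma>^t * norm (lyrec N W V t) \<le> (norm V + real t * norm W) * b^t"
proof (induction t)
  case 0
  then show ?case by simp
next
  case (Suc t)
  have "\<gamma>^Suc t * norm (lyrec N W V (Suc t)) \<le> \<gamma>^Suc t * (c^2 * norm (lyrec N W V t) + norm W)"
    by (auto intro!: mult_left_mono order_trans[OF norm_triangle_ineq] norm_cong_le[OF c c0] simp: g0)
  also have "\<dots> = (\<gamma> * c^2) * (\<gamma>^t * norm (lyrec N W V t)) + \<gamma>^Suc t * norm W"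
    by (simp add: algebra_simps)
  also have "\<dots> \<le> b * ((norm V + real t * norm W) * b^t) + b^Suc t * norm W"
  proof (rule add_mono)
    have b0: "0 \<le> b" using g0 b2 by simp
    show "(\<gamma> * c^2) * (\<gamma>^t * norm (lyrec N W V t)) \<le> b * ((norm V + real t * norm W) * b^t)"
      by (rule mult_mono[OF b1 Suc.IH b0]) (simp add: g0)
    show "\<gamma>^Suc t * norm W \<le> b^Suc t * norm W"
      by (rule mult_right_mono[OF power_mono]) (use g0 b2 in auto)
  qed
  also have "\<dots> = (norm V + real (Suc t) * norm W) * b^Suc t"
    by (simp add: algebra_simps)
  finally show ?case .
qed

lemma lyrec_summable:
  assumes c: "\<And>v. norm (N *v v) \<le> c * norm v" and c0: "0 \<le> c"
    and g0: "0 \<le> \<gamma>" and b1: "\<gamma> * c^2 \<le> b" and b2: "\<gamma> \<le> b" and b3: "b < 1"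
  shows "summable (\<lambda>t. norm (\<gamma>^t *\<^sub>R lyrec N W V t))"
proof -
  have b0: "0 \<le> b" using g0 b2 by simp
  have "summable (\<lambda>t. norm V * b^t + norm W * (real t * b^t))"
    by (intro summable_add summable_mult summable_geometric summable_nat_pow) (use b0 b3 in auto)
  then show ?thesis
  proof (rule summable_comparison_test[rotated], intro exI allI impI)
    fix n :: nat
    have "\<gamma>^n * norm (lyrec N W V n) \<le> (norm V + real n * norm W) * b^n"
      by (rule lyrec_bound[OF c c0 g0 b1 b2])
    then show "norm (norm (\<gamma>^n *\<^sub>R lyrec N W V n)) \<le> norm V * b^n + norm W * (real n * b^n)"
      using g0 by (simp add: algebra_simps)
  qed
qed

lemma lyrec_sum_eq:
  assumes c: "\<And>v. norm (N *v v) \<le> c * norm v" and c0: "0 \<le> c"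
    and g0: "0 \<le> \<gamma>" and g1: "\<gamma> < 1" and gc: "\<gamma> * c^2 < 1"
  shows "summable (\<lambda>t. \<gamma>^t *\<^sub>R lyrec N W V t)"
    and "(\<Sum>t. \<gamma>^t *\<^sub>R lyrec N W V t) = V + \<gamma> *\<^sub>R (N ** (\<Sum>t. \<gamma>^t *\<^sub>R lyrec N W V t) ** transpose N) + (\<gamma> / (1 - \<gamma>)) *\<^sub>R W"
proof -
  define b where "b = max \<gamma> (\<gamma> * c^2)"
  have sn: "summable (\<lambda>t. norm (\<gamma>^t *\<^sub>R lyrec N W V t))"
    by (rule lyrec_summable[OF c c0 g0, of b]) (use g1 gc in \<open>auto simp: b_def\<close>)
  then show s: "summable (\<lambda>t. \<gamma>^t *\<^sub>R lyrec N W V t)" by (rule summable_norm_cancel)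
  define S where "S = (\<Sum>t. \<gamma>^t *\<^sub>R lyrec N W V t)"
  have "(\<lambda>t. \<gamma>^t *\<^sub>R lyrec N W V t) sums S" using s by (simp add: S_def summable_sums)
  then have "(\<lambda>t. \<gamma>^(Suc t) *\<^sub>R lyrec N W V (Suc t)) sums (S - V)"
    by (subst sums_Suc_iff) simp
  moreover have "(\<lambda>t. \<gamma>^(Suc t) *\<^sub>R lyrec N W V (Suc t)) sums (\<gamma> *\<^sub>R (N ** S ** transpose N) + (\<gamma> / (1 - \<gamma>)) *\<^sub>R W)"
  proof -
    have a: "(\<lambda>t. \<gamma> *\<^sub>R (N ** (\<gamma>^t *\<^sub>R lyrec N W V t) ** transpose N)) sums (\<gamma> *\<^sub>R (N ** S ** transpose N))"
      using bounded_linear.sums[OF bounded_linear_compose[OF bounded_linear_scaleR_right bl_sandwich] \<open>_ sums S\<close>] .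
    have "(\<lambda>t. \<gamma> * \<gamma>^t) sums (\<gamma> * (1 / (1 - \<gamma>)))"
      by (rule sums_mult, rule geometric_sums) (use g0 g1 in auto)
    then have b: "(\<lambda>t. \<gamma>^(Suc t) *\<^sub>R W) sums ((\<gamma> / (1 - \<gamma>)) *\<^sub>R W)"
      by (intro sums_scaleR_left) simp
    show ?thesis using sums_add[OF a b]
      by (simp add: matrix_add_ldistrib mat_radd matrix_scalar_ac scalar_matrix_assoc scaleR_add_right)
  qed
  ultimately have "S - V = \<gamma> *\<^sub>R (N ** S ** transpose N) + (\<gamma> / (1 - \<gamma>)) *\<^sub>R W"
    using sums_unique2 by blast
  then show "S = V + \<gamma> *\<^sub>R (N ** S ** transpose N) + (\<gamma> / (1 - \<gamma>)) *\<^sub>R W"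
    by (simp add: algebra_simps)
qed

lemma lyap_unique:
  fixes M :: "real^'n^'n"
  assumes c: "\<And>v. norm (M *v v) \<le> c * norm v" and c0: "0 \<le> c" and g0: "0 \<le> \<gamma>" and gc: "\<gamma> * c^2 < 1"
    and P1: "P1 = S + \<gamma> *\<^sub>R (transpose M ** P1 ** M)"
    and P2: "P2 = S + \<gamma> *\<^sub>R (transpose M ** P2 ** M)"
  shows "P1 = P2"
proof -
  define D where "D = P1 - P2"
  have "D = \<gamma> *\<^sub>R (transpose M ** D ** transpose (transpose M))"
    unfolding D_def using P1 P2
    by (simp add: mat_rdiff mat_ldiff scaleR_diff_right) (metis (no_types, lifting) add_diff_cancel_left)
  then have "norm D = \<gamma> * norm (transpose M ** D ** transpose (transpose M))"
    by (metis g0 norm_scaleR abs_of_nonneg)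
  also have "\<dots> \<le> \<gamma> * (c^2 * norm D)"
    by (rule mult_left_mono[OF norm_cong_le[OF transpose_bound[OF c c0] c0] g0])
  finally have "(1 - \<gamma> * c^2) * norm D \<le> 0" by (simp add: algebra_simps)
  then have "norm D \<le> 0" using gc by (simp add: mult_le_0_iff)
  then show ?thesis by (simp add: D_def)
qed

lemma lyap_exists:
  fixes M :: "real^'n^'n"
  assumes c: "\<And>v. norm (M *v v) \<le> c * norm v" and c0: "0 \<le> c" and g0: "0 \<le> \<gamma>" and g1: "\<gamma> < 1" and gc: "\<gamma> * c^2 < 1"
  shows "\<exists>P. P = S + \<gamma> *\<^sub>R (transpose M ** P ** M)"
proof -
  have "(\<Sum>t. \<gamma>^t *\<^sub>R lyrec (transpose M) 0 S t) = S + \<gamma> *\<^sub>R (transpose M ** (\<Sum>t. \<gamma>^t *\<^sub>R lyrec (transpose M) 0 S t) ** transpose (transpose M)) + (\<gamma> / (1 - \<gamma>)) *\<^sub>R 0"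
    by (rule lyrec_sum_eq(2)[OF transpose_bound[OF c c0] c0 g0 g1 gc])
  then show ?thesis by auto
qed

lemma lyap_the:
  fixes M :: "real^'n^'n"
  assumes c: "\<And>v. norm (M *v v) \<le> c * norm v" and c0: "0 \<le> c" and g0: "0 \<le> \<gamma>" and g1: "\<gamma> < 1" and gc: "\<gamma> * c^2 < 1"
  shows "(THE P. P = S + \<gamma> *\<^sub>R (transpose M ** P ** M)) = S + \<gamma> *\<^sub>R (transpose M ** (THE P. P = S + \<gamma> *\<^sub>R (transpose M ** P ** M)) ** M)"
    and "transpose S = S \<Longrightarrow> transpose (THE P. P = S + \<gamma> *\<^sub>R (transpose M ** P ** M)) = (THE P. P = S + \<gamma> *\<^sub>R (transpose M ** P ** M))"
proof -
  obtain P where P: "P = S + \<gamma> *\<^sub>R (transpose M ** P ** M)" using lyap_exists[OF c c0 g0 g1 gc] by blast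
  have the: "(THE P. P = S + \<gamma> *\<^sub>R (transpose M ** P ** M)) = P"
    by (rule the_equality[where P="\<lambda>P. P = S + \<gamma> *\<^sub>R (transpose M ** P ** M)", OF P]) (rule lyap_unique[OF c c0 g0 gc _ P])
  show "(THE P. P = S + \<gamma> *\<^sub>R (transpose M ** P ** M)) = S + \<gamma> *\<^sub>R (transpose M ** (THE P. P = S + \<gamma> *\<^sub>R (transpose M ** P ** M)) ** M)"
    unfolding the by (rule P)
  assume S: "transpose S = S"
  have "transpose P = S + \<gamma> *\<^sub>R (transpose M ** transpose P ** M)"
    by (subst P) (simp add: transpose_add transpose_scalar matrix_transpose_mul S matrix_mul_assoc)
  then show "transpose (THE P. P = S + \<gamma> *\<^sub>R (transpose M ** P ** M)) = (THE P. P = S + \<gamma> *\<^sub>R (transpose M ** P ** M))"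
    unfolding the by (rule lyap_unique[OF c c0 g0 gc _ P])
qed

lemmas mat_simps = matrix_add_ldistrib mat_radd mat_ldiff mat_rdiff matrix_scalar_ac scalar_matrix_assoc
  transpose_add transpose_diff matrix_transpose_mul transpose_scalar matrix_mul_assoc mat_rneg mat_lneg transpose_neg

lemma key_identity:
  fixes M0 :: "real^'d^'d" and B :: "real^'l^'d" and K U :: "real^'d^'l" and R :: "real^'l^'l" and P S0 :: "real^'d^'d"
  assumes R: "transpose R = R" and P: "transpose P = P"
  shows "(S0 + transpose (K + s *\<^sub>R U) ** R ** (K + s *\<^sub>R U)) - (S0 + transpose K ** R ** K)
     + \<gamma> *\<^sub>R (transpose (M0 + B ** (K + s *\<^sub>R U)) ** P ** (M0 + B ** (K + s *\<^sub>R U)))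
     - \<gamma> *\<^sub>R (transpose (M0 + B ** K) ** P ** (M0 + B ** K))
   = s *\<^sub>R (transpose U ** (R ** K + \<gamma> *\<^sub>R (transpose B ** P ** (M0 + B ** K)))
           + transpose (R ** K + \<gamma> *\<^sub>R (transpose B ** P ** (M0 + B ** K))) ** U)
     + s^2 *\<^sub>R (transpose U ** (R + \<gamma> *\<^sub>R (transpose B ** P ** B)) ** U)"
  by (simp add: mat_simps R P algebra_simps power2_eq_square)

lemma trace_scaleR: "trace (c *\<^sub>R (A::real^'n^'n)) = c * trace A"
  by (simp add: trace_def sum_distrib_left)

lemma trace_scaleR_mult: "trace ((c *\<^sub>R (A::real^'n^'m)) ** B) = c * trace (A ** B)"
  by (metis scalar_matrix_assoc trace_scaleR)

lemma sc_out1: "(k *\<^sub>R (A::real^'n^'m)) ** (B::real^'p^'n) = k *\<^sub>R (A ** B)"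
  by (simp add: scalar_matrix_assoc)
lemma sc_out2: "(A::real^'n^'m) ** (k *\<^sub>R (B::real^'p^'n)) = k *\<^sub>R (A ** B)"
  by (simp add: matrix_scalar_ac scalar_matrix_assoc)

lemma ifmul1: "(if P then (1::real) else 0) * x = (if P then x else 0)" by simp
lemma ifmul2: "x * (if P then (1::real) else 0) = (if P then x else 0)" by simp
lemma ifconj0: "(if c = i \<and> Q then (x::real) else 0) = (if c = i then (if Q then x else 0) else 0)" by simp

lemma munitT_mult: "transpose (munit i k) ** (E::real^'p^'l) = (\<chi> a b. if a = k then E $ i $ b else 0)"
  by (simp add: vec_eq_iff matrix_matrix_mult_def transpose_def munit_def ifmul1 ifconj0 sum.delta')

lemma Tmult_munit: "transpose (E::real^'d^'l) ** munit i k = (\<chi> a b. if b = k then E $ i $ a else 0)"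
  by (simp add: vec_eq_iff matrix_matrix_mult_def transpose_def munit_def ifmul2 ifconj0 sum.delta' mult.commute)

lemma linear_trace_mult: "linear (\<lambda>X::real^'n^'m. trace ((A::real^'m^'n) ** X))"
  by (rule linearI) (simp_all add: matrix_add_ldistrib trace_add matrix_scalar_ac trace_scaleR_mult)

lemma bl_trace_mult: "bounded_linear (\<lambda>X::real^'n^'m. trace ((A::real^'m^'n) ** X))"
  using linear_trace_mult linear_conv_bounded_linear by blast

lemma cost_diff:
  fixes X W P S0 Ss M0 Ms :: "real^'d^'d"
  assumes X: "X = W + \<gamma> *\<^sub>R (Ms ** X ** transpose Ms)"
    and P: "P = S0 + \<gamma> *\<^sub>R (transpose M0 ** P ** M0)"
  shows "trace (Ss ** X) - trace (P ** W) =
     trace ((Ss - S0 + \<gamma> *\<^sub>R (transpose Ms ** P ** Ms) - \<gamma> *\<^sub>R (transpose M0 ** P ** M0)) ** X)"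
proof -
  have W: "W = X - \<gamma> *\<^sub>R (Ms ** X ** transpose Ms)" using X by (simp add: algebra_simps)
  have t1: "trace (P ** Ms ** X ** transpose Ms) = trace (transpose Ms ** P ** Ms ** X)"
    by (metis matrix_mul_assoc trace_mul_sym)
  have t2: "trace (P ** X) = trace (S0 ** X) + \<gamma> * trace (transpose M0 ** P ** M0 ** X)"
    by (subst P) (simp add: mat_radd trace_add sc_out1 sc_out2 trace_scaleR)
  show ?thesis
    unfolding W
    by (simp add: mat_ldiff mat_rdiff mat_radd trace_add trace_sub sc_out1 sc_out2 trace_scaleR t1 t2 matrix_mul_assoc)
qed

lemma trace_munit:
  fixes E :: "real^'d^'l" and X :: "real^'d^'d"
  assumes X: "transpose X = X"
  shows "trace ((transpose (munit i k) ** E + transpose E ** munit i k) ** X) = 2 * (E ** X) $ i $ k"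
proof -
  have X': "\<And>a b. X $ a $ b = X $ b $ a" using X by (metis transpose_def vec_lambda_beta)
  have "trace (transpose (munit i k) ** E ** X) = (E ** X) $ i $ k"
  proof -
    have "\<And>a. ((\<chi> a b. if a = k then E $ i $ b else 0) ** X) $ a $ a = (if a = k then (E ** X) $ i $ k else 0)"
      by (simp add: matrix_matrix_mult_def)
    then show ?thesis unfolding munitT_mult trace_def by (simp add: sum.delta')
  qed
  moreover have "trace (transpose E ** munit i k ** X) = (E ** X) $ i $ k"
  proof -
    have "\<And>a. ((\<chi> a b. if b = k then E $ i $ a else 0) ** X) $ a $ a = E $ i $ a * X $ a $ k"
      by (simp add: matrix_matrix_mult_def X' if_distrib[of "\<lambda>x. x * _"] sum.delta cong: if_cong)
    then show ?thesis unfolding Tmult_munit trace_def by (simp add: matrix_matrix_mult_def)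
  qed
  ultimately show ?thesis by (simp add: mat_radd trace_add)
qed

lemma deriv_core:
  fixes \<phi> :: "real \<Rightarrow> real" and Xf :: "real \<Rightarrow> real^'d^'d" and M0 :: "real^'d^'d" and B :: "real^'l^'d"
    and K U :: "real^'d^'l" and R :: "real^'l^'l" and P S0 W :: "real^'d^'d"
  assumes R: "transpose R = R" and Psym: "transpose P = P"
    and P: "P = (S0 + transpose K ** R ** K) + \<gamma> *\<^sub>R (transpose (M0 + B ** K) ** P ** (M0 + B ** K))"
    and ev: "eventually (\<lambda>s. \<phi> s = trace ((S0 + transpose (K + s *\<^sub>R U) ** R ** (K + s *\<^sub>R U)) ** Xf s)
          \<and> Xf s = W + \<gamma> *\<^sub>R ((M0 + B ** (K + s *\<^sub>R U)) ** Xf s ** transpose (M0 + B ** (K + s *\<^sub>R U)))) (nhds 0)"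
    and Xc: "(Xf \<longlongrightarrow> Xf 0) (at 0)"
  shows "(\<phi> has_real_derivative trace ((transpose U ** (R ** K + \<gamma> *\<^sub>R (transpose B ** P ** (M0 + B ** K)))
           + transpose (R ** K + \<gamma> *\<^sub>R (transpose B ** P ** (M0 + B ** K))) ** U) ** Xf 0)) (at 0)"
proof -
  define E where "E = R ** K + \<gamma> *\<^sub>R (transpose B ** P ** (M0 + B ** K))"
  define G where "G = R + \<gamma> *\<^sub>R (transpose B ** P ** B)"
  define A where "A = transpose U ** E + transpose E ** U"
  have diff: "\<phi> s - trace (P ** W) = s * trace (A ** Xf s) + s^2 * trace (transpose U ** G ** U ** Xf s)"
    if hs: "\<phi> s = trace ((S0 + transpose (K + s *\<^sub>R U) ** R ** (K + s *\<^sub>R U)) ** Xf s)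
          \<and> Xf s = W + \<gamma> *\<^sub>R ((M0 + B ** (K + s *\<^sub>R U)) ** Xf s ** transpose (M0 + B ** (K + s *\<^sub>R U)))" for s
  proof -
    have "\<phi> s - trace (P ** W) = trace (((S0 + transpose (K + s *\<^sub>R U) ** R ** (K + s *\<^sub>R U)) - (S0 + transpose K ** R ** K)
     + \<gamma> *\<^sub>R (transpose (M0 + B ** (K + s *\<^sub>R U)) ** P ** (M0 + B ** (K + s *\<^sub>R U)))
     - \<gamma> *\<^sub>R (transpose (M0 + B ** K) ** P ** (M0 + B ** K))) ** Xf s)"
      using cost_diff[OF hs[THEN conjunct2] P] hs[THEN conjunct1] by simp
    also have "\<dots> = trace ((s *\<^sub>R A + s^2 *\<^sub>R (transpose U ** G ** U)) ** Xf s)"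
      unfolding key_identity[OF R Psym] A_def E_def G_def ..
    also have "\<dots> = s * trace (A ** Xf s) + s^2 * trace (transpose U ** G ** U ** Xf s)"
      by (simp add: mat_radd trace_add sc_out1 trace_scaleR)
    finally show ?thesis .
  qed
  have ev0: "\<phi> 0 - trace (P ** W) = 0"
    using diff[OF eventually_nhds_x_imp_x[OF ev]] by simp
  have "eventually (\<lambda>s. (\<phi> s - \<phi> 0) / (s - 0) = trace (A ** Xf s) + s * trace (transpose U ** G ** U ** Xf s)) (at 0)"
    using ev unfolding eventually_at_filter
  proof (rule eventually_mono)
    fix s assume h: "\<phi> s = trace ((S0 + transpose (K + s *\<^sub>R U) ** R ** (K + s *\<^sub>R U)) ** Xf s)
          \<and> Xf s = W + \<gamma> *\<^sub>R ((M0 + B ** (K + s *\<^sub>R U)) ** Xf s ** transpose (M0 + B ** (K + s *\<^sub>R U)))"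
    show "s \<noteq> 0 \<longrightarrow> s \<in> UNIV \<longrightarrow> (\<phi> s - \<phi> 0) / (s - 0) = trace (A ** Xf s) + s * trace (transpose U ** G ** U ** Xf s)"
    proof (intro impI)
      assume "s \<noteq> 0"
      have "\<phi> s - \<phi> 0 = s * trace (A ** Xf s) + s^2 * trace (transpose U ** G ** U ** Xf s)"
        using diff[OF h] ev0 by simp
      then show "(\<phi> s - \<phi> 0) / (s - 0) = trace (A ** Xf s) + s * trace (transpose U ** G ** U ** Xf s)"
        using \<open>s \<noteq> 0\<close> by (simp add: field_simps power2_eq_square)
    qed
  qed
  moreover have "((\<lambda>s. trace (A ** Xf s) + s * trace (transpose U ** G ** U ** Xf s)) \<longlongrightarrow> trace (A ** Xf 0) + 0 * trace (transpose U ** G ** U ** Xf 0)) (at 0)"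
    by (intro tendsto_intros bounded_linear.tendsto[OF bl_trace_mult Xc])
  ultimately have "((\<lambda>s. (\<phi> s - \<phi> 0) / (s - 0)) \<longlongrightarrow> trace (A ** Xf 0)) (at 0)"
    by (simp add: tendsto_cong)
  then show ?thesis
    unfolding has_field_derivative_iff A_def E_def .
qed

definition L2 :: "'a measure \<Rightarrow> ('a \<Rightarrow> real^'n) \<Rightarrow> bool" where
  "L2 M X \<longleftrightarrow> X \<in> borel_measurable M \<and> integrable M (\<lambda>\<omega>. (norm (X \<omega>))^2)"

lemma cont_outer: "continuous_on UNIV (outer :: real^'n \<Rightarrow> real^'n^'n)"
  unfolding outer_def by (intro continuous_intros)

lemma meas_nth: "X \<in> borel_measurable M \<Longrightarrow> (\<lambda>\<omega>. (X \<omega> :: real^'n) $ i) \<in> borel_measurable M"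
  by (rule borel_measurable_continuous_on[of "\<lambda>v. v $ i"]) (auto intro: continuous_intros)

lemma meas_outer: "X \<in> borel_measurable M \<Longrightarrow> (\<lambda>\<omega>. outer (X \<omega> :: real^'n)) \<in> borel_measurable M"
  by (rule borel_measurable_continuous_on[OF cont_outer])

lemma meas_mv: "X \<in> borel_measurable M \<Longrightarrow> (\<lambda>\<omega>. (N::real^'n^'m) *v (X \<omega> :: real^'n)) \<in> borel_measurable M"
  by (rule borel_measurable_continuous_on[of "\<lambda>v. N *v v"]) (auto intro: continuous_intros)

lemma norm_outer: "norm (outer (x::real^'n)) = (norm x)^2"
proof -
  have r: "outer x $ i = (x $ i) *\<^sub>R x" for i by (simp add: outer_def vec_eq_iff)
  have "(norm (outer x))^2 = (\<Sum>i\<in>UNIV. (x $ i)^2 * (norm x)^2)"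
    unfolding norm_sq_rows r by (simp add: power_mult_distrib)
  also have "\<dots> = ((norm x)^2)^2"
    unfolding sum_distrib_right[symmetric] norm_sq_entries[of x, symmetric] by (simp add: power2_eq_square)
  finally have "(norm (outer x))^2 = ((norm x)^2)^2" .
  then show ?thesis using power2_eq_iff_nonneg[of "norm (outer x)" "(norm x)^2"] by simp
qed

lemma outer_sym: "transpose (outer x) = outer x"
  by (simp add: outer_def transpose_def vec_eq_iff mult.commute)

context prob_space
begin

lemma L2_integrable: fixes X :: "'a \<Rightarrow> real^'n" assumes "L2 M X" shows "integrable M X"
proof (rule Bochner_Integration.integrable_bound[where f="\<lambda>\<omega>. 1 + (norm (X \<omega>))^2"])
  show "integrable M (\<lambda>\<omega>. 1 + (norm (X \<omega>))^2)"
    using assms unfolding L2_def by (intro Bochner_Integration.integrable_add) auto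
  show "X \<in> borel_measurable M" using assms unfolding L2_def by simp
  have "n \<le> 1 + n^2" if "0 \<le> n" for n :: real
    using sum_squares_bound[of n 1] that by (simp add: power2_eq_square)
  then show "AE x in M. norm (X x) \<le> norm (1 + (norm (X x))\<^sup>2)"
    by (auto intro!: AE_I2 order_trans[OF _ abs_ge_self])
qed

lemma L2_nth: fixes X :: "'a \<Rightarrow> real^'n" shows "L2 M X \<Longrightarrow> integrable M (\<lambda>\<omega>. X \<omega> $ i)"
  by (rule integrable_bounded_linear[OF bounded_linear_vec_nth L2_integrable])

lemma L2_prod: fixes X Y :: "'a \<Rightarrow> real^'n" assumes X: "L2 M X" and Y: "L2 M Y"
  shows "integrable M (\<lambda>\<omega>. X \<omega> $ i * Y \<omega> $ j)"
proof (rule Bochner_Integration.integrable_bound[where f="\<lambda>\<omega>. (norm (X \<omega>))^2 + (norm (Y \<omega>))^2"])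
  show "integrable M (\<lambda>\<omega>. (norm (X \<omega>))^2 + (norm (Y \<omega>))^2)"
    using X Y unfolding L2_def by (intro Bochner_Integration.integrable_add) auto
  show "(\<lambda>\<omega>. X \<omega> $ i * Y \<omega> $ j) \<in> borel_measurable M"
    using X Y unfolding L2_def by (intro borel_measurable_times meas_nth) auto
  have "\<bar>x $ i * y $ j\<bar> \<le> (norm x)^2 + (norm y)^2" for x y :: "real^'n"
  proof -
    have "\<bar>x $ i * y $ j\<bar> \<le> norm x * norm y"
      by (simp add: abs_mult mult_mono component_le_norm_cart)
    also have "\<dots> \<le> (norm x)^2 + (norm y)^2"
    proof -
      have "2 * (norm x * norm y) \<le> (norm x)^2 + (norm y)^2"
        using sum_squares_bound[of "norm x" "norm y"] by (simp add: mult.assoc)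
      moreover have "0 \<le> norm x * norm y" by simp
      ultimately show ?thesis by linarith
    qed
    finally show ?thesis .
  qed
  then show "AE x in M. norm (X x $ i * Y x $ j) \<le> norm ((norm (X x))\<^sup>2 + (norm (Y x))\<^sup>2)"
    by (auto intro!: AE_I2 order_trans[OF _ abs_ge_self])
qed

lemma L2_const: "L2 M (\<lambda>_. c)"
  unfolding L2_def by simp

lemma L2_affine: fixes X Y :: "'a \<Rightarrow> real^'n" assumes X: "L2 M X" and Y: "L2 M Y"
  shows "L2 M (\<lambda>\<omega>. (N::real^'n^'n) *v X \<omega> + Y \<omega>)"
  unfolding L2_def
proof
  show m: "(\<lambda>\<omega>. N *v X \<omega> + Y \<omega>) \<in> borel_measurable M"
    using X Y unfolding L2_def by (intro borel_measurable_add meas_mv) auto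
  show "integrable M (\<lambda>\<omega>. (norm (N *v X \<omega> + Y \<omega>))^2)"
  proof (rule Bochner_Integration.integrable_bound[where f="\<lambda>\<omega>. 2 * (opnorm N)^2 * (norm (X \<omega>))^2 + 2 * (norm (Y \<omega>))^2"])
    show "integrable M (\<lambda>\<omega>. 2 * (opnorm N)^2 * (norm (X \<omega>))^2 + 2 * (norm (Y \<omega>))^2)"
      using X Y unfolding L2_def by (intro Bochner_Integration.integrable_add Bochner_Integration.integrable_mult_right) auto
    show "(\<lambda>\<omega>. (norm (N *v X \<omega> + Y \<omega>))^2) \<in> borel_measurable M"
      using m by measurable
    have "(norm (N *v x + y))^2 \<le> 2 * (opnorm N)^2 * (norm x)^2 + 2 * (norm y)^2" for x y :: "real^'n"
    proof -
      have a: "norm (N *v x + y) \<le> opnorm N * norm x + norm y"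
        using norm_triangle_ineq[of "N *v x" y] mv_opnorm[of N x] by simp
      have "(norm (N *v x + y))^2 \<le> (opnorm N * norm x + norm y)^2"
        by (rule power_mono[OF a]) simp
      also have "\<dots> \<le> 2 * (opnorm N * norm x)^2 + 2 * (norm y)^2"
        using sum_squares_bound[of "opnorm N * norm x" "norm y"] by (simp add: power2_sum)
      finally show ?thesis by (simp add: power_mult_distrib)
    qed
    then show "AE x in M. norm ((norm (N *v X x + Y x))\<^sup>2) \<le> norm (2 * (opnorm N)\<^sup>2 * (norm (X x))\<^sup>2 + 2 * (norm (Y x))\<^sup>2)"
      by (auto intro!: AE_I2 order_trans[OF _ abs_ge_self])
  qed
qed

lemma L2_outer: fixes X :: "'a \<Rightarrow> real^'n" assumes X: "L2 M X" shows "integrable M (\<lambda>\<omega>. outer (X \<omega>))"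
proof (rule Bochner_Integration.integrable_bound[where f="\<lambda>\<omega>. (norm (X \<omega>))^2"])
  show "integrable M (\<lambda>\<omega>. (norm (X \<omega>))^2)" using X unfolding L2_def by simp
  show "(\<lambda>\<omega>. outer (X \<omega>)) \<in> borel_measurable M" using X unfolding L2_def by (intro meas_outer) auto
  show "AE x in M. norm (outer (X x)) \<le> norm ((norm (X x))\<^sup>2)"
    by (auto simp: norm_outer)
qed

lemma outer_entry: fixes X :: "'a \<Rightarrow> real^'n" assumes X: "L2 M X"
  shows "(\<integral>\<omega>. outer (X \<omega>) \<partial>M) $ i $ j = (\<integral>\<omega>. X \<omega> $ i * X \<omega> $ j \<partial>M)"
proof -
  have bl: "bounded_linear (\<lambda>A::real^'n^'n. A $ i $ j)"
    by (rule bounded_linear_compose[OF bounded_linear_vec_nth bounded_linear_vec_nth])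
  show ?thesis
    using integral_bounded_linear[OF bl L2_outer[OF X]] by (simp add: outer_def)
qed

end

definition unc :: "'a measure \<Rightarrow> ('a \<Rightarrow> real^'n) \<Rightarrow> ('a \<Rightarrow> real^'n) \<Rightarrow> bool" where
  "unc M X Y \<longleftrightarrow> (\<forall>i j. (\<integral>\<omega>. X \<omega> $ i * Y \<omega> $ j \<partial>M) = 0)"

lemma vec_eqI2: "(\<And>i. x $ i = y $ i) \<Longrightarrow> x = y" by (simp add: vec_eq_iff)

context prob_space
begin

lemma int_lin:
  assumes "\<And>k. integrable M (f k)"
  shows "(\<integral>\<omega>. (\<Sum>k\<in>UNIV. (c k::real) * f k \<omega>) \<partial>M) = (\<Sum>k\<in>UNIV. c k * (\<integral>\<omega>. f k \<omega> \<partial>M))"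
    and "integrable M (\<lambda>\<omega>. \<Sum>k\<in>UNIV. (c k::real) * f k \<omega>)"
  using assms by (simp_all add: Bochner_Integration.integral_sum Bochner_Integration.integrable_sum)

lemma unc_affine:
  fixes X Z Y :: "'a \<Rightarrow> real^'n"
  assumes X: "L2 M X" and Z: "L2 M Z" and Y: "L2 M Y" and uX: "unc M X Y" and uZ: "unc M Z Y"
  shows "unc M (\<lambda>\<omega>. N *v X \<omega> + Z \<omega>) Y"
  unfolding unc_def
proof (intro allI)
  fix i j
  have eq: "(N *v X \<omega> + Z \<omega>) $ i * Y \<omega> $ j = (\<Sum>k\<in>UNIV. N $ i $ k * (X \<omega> $ k * Y \<omega> $ j)) + Z \<omega> $ i * Y \<omega> $ j" for \<omega>
    by (simp add: matrix_vector_mult_def distrib_right sum_distrib_right mult.assoc)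
  have "(\<integral>\<omega>. (N *v X \<omega> + Z \<omega>) $ i * Y \<omega> $ j \<partial>M) =
        (\<integral>\<omega>. (\<Sum>k\<in>UNIV. N $ i $ k * (X \<omega> $ k * Y \<omega> $ j)) \<partial>M) + (\<integral>\<omega>. Z \<omega> $ i * Y \<omega> $ j \<partial>M)"
    unfolding eq
    by (intro Bochner_Integration.integral_add int_lin L2_prod X Y Z)
  also have "\<dots> = 0"
    using uX uZ unfolding unc_def by (simp add: int_lin(1)[OF L2_prod[OF X Y]])
  finally show "(\<integral>\<omega>. (N *v X \<omega> + Z \<omega>) $ i * Y \<omega> $ j \<partial>M) = 0" .
qed

lemma mom_step:
  fixes X E :: "'a \<Rightarrow> real^'n"
  assumes X: "L2 M X" and E: "L2 M E" and u: "unc M X E"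
  shows "(\<integral>\<omega>. outer (N *v X \<omega> + E \<omega>) \<partial>M) = N ** (\<integral>\<omega>. outer (X \<omega>) \<partial>M) ** transpose N + (\<integral>\<omega>. outer (E \<omega>) \<partial>M)"
proof -
  have u': "(\<integral>\<omega>. X \<omega> $ k * E \<omega> $ j \<partial>M) = 0" for k j using u unfolding unc_def by simp
  have Y: "L2 M (\<lambda>\<omega>. N *v X \<omega> + E \<omega>)" by (rule L2_affine[OF X E])
  show ?thesis
  proof (intro vec_eqI2)
    fix i j
    have eq: "(N *v X \<omega> + E \<omega>) $ i * (N *v X \<omega> + E \<omega>) $ j =
       (\<Sum>l\<in>UNIV. N $ j $ l * (\<Sum>k\<in>UNIV. N $ i $ k * (X \<omega> $ k * X \<omega> $ l)))
       + (\<Sum>k\<in>UNIV. N $ i $ k * (X \<omega> $ k * E \<omega> $ j))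
       + (\<Sum>l\<in>UNIV. N $ j $ l * (X \<omega> $ l * E \<omega> $ i))
       + E \<omega> $ i * E \<omega> $ j" for \<omega>
      by (simp add: matrix_vector_mult_def sum_distrib_right sum_distrib_left algebra_simps)
    have i1: "integrable M (\<lambda>\<omega>. \<Sum>k\<in>UNIV. N $ i $ k * (X \<omega> $ k * X \<omega> $ l))" for l
      by (intro int_lin L2_prod X)
    have "(\<integral>\<omega>. outer (N *v X \<omega> + E \<omega>) \<partial>M) $ i $ j = (\<integral>\<omega>. (N *v X \<omega> + E \<omega>) $ i * (N *v X \<omega> + E \<omega>) $ j \<partial>M)"
      by (rule outer_entry[OF Y])
    also have "\<dots> = (\<Sum>l\<in>UNIV. N $ j $ l * (\<Sum>k\<in>UNIV. N $ i $ k * (\<integral>\<omega>. X \<omega> $ k * X \<omega> $ l \<partial>M)))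
       + (\<integral>\<omega>. E \<omega> $ i * E \<omega> $ j \<partial>M)"
      unfolding eq
      by (simp add: Bochner_Integration.integral_add Bochner_Integration.integrable_add int_lin i1 L2_prod X E u')
    also have "\<dots> = (N ** (\<integral>\<omega>. outer (X \<omega>) \<partial>M) ** transpose N + (\<integral>\<omega>. outer (E \<omega>) \<partial>M)) $ i $ j"
      by (simp add: outer_entry[OF X] outer_entry[OF E] matrix_matrix_mult_def transpose_def
          sum_distrib_left sum_distrib_right mult_ac)
    finally show "(\<integral>\<omega>. outer (N *v X \<omega> + E \<omega>) \<partial>M) $ i $ j = (N ** (\<integral>\<omega>. outer (X \<omega>) \<partial>M) ** transpose N + (\<integral>\<omega>. outer (E \<omega>) \<partial>M)) $ i $ j" .
  qed
qed

end

definition noise_good :: "'a measure \<Rightarrow> (nat \<Rightarrow> 'a \<Rightarrow> real^'d) \<Rightarrow> bool" where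
  "noise_good M eps \<longleftrightarrow> prob_space M \<and> (\<forall>t. L2 M (eps t)) \<and>
     (\<forall>t\<ge>1. distr M borel (eps t) = distr M borel (eps 1) \<and> (\<integral>\<omega>. eps t \<omega> \<partial>M) = 0) \<and>
     (\<forall>s r. s \<noteq> r \<longrightarrow> prob_space.indep_var M borel (eps s) borel (eps r))"

lemma ng_L2: "noise_good M eps \<Longrightarrow> L2 M (eps t)" unfolding noise_good_def by blast
lemma ng_distr: "noise_good M eps \<Longrightarrow> t \<ge> 1 \<Longrightarrow> distr M borel (eps t) = distr M borel (eps 1)" unfolding noise_good_def by blast
lemma ng_mean: "noise_good M eps \<Longrightarrow> t \<ge> 1 \<Longrightarrow> (\<integral>\<omega>. eps t \<omega> \<partial>M) = 0" unfolding noise_good_def by blast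
lemma ng_indep: "noise_good M eps \<Longrightarrow> s \<noteq> r \<Longrightarrow> prob_space.indep_var M borel (eps s) borel (eps r)" unfolding noise_good_def by blast
lemma ng_prob: "noise_good M eps \<Longrightarrow> prob_space M" unfolding noise_good_def by blast

context prob_space
begin

lemma mean_nth: fixes Y :: "'a \<Rightarrow> real^'n" assumes "L2 M Y"
  shows "(\<integral>\<omega>. Y \<omega> $ j \<partial>M) = (\<integral>\<omega>. Y \<omega> \<partial>M) $ j"
  by (rule integral_bounded_linear[OF bounded_linear_vec_nth L2_integrable[OF assms]])

lemma indep_unc:
  fixes X Y :: "'a \<Rightarrow> real^'n"
  assumes ind: "indep_var borel X borel Y" and X: "L2 M X" and Y: "L2 M Y" and m: "(\<integral>\<omega>. Y \<omega> \<partial>M) = 0"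
  shows "unc M X Y"
  unfolding unc_def
proof (intro allI)
  fix i j
  have mi: "(\<lambda>v::real^'n. v $ i) \<in> borel_measurable borel" for i
    by (rule borel_measurable_continuous_onI) (auto intro: continuous_intros)
  have "indep_var borel ((\<lambda>v. v $ i) \<circ> X) borel ((\<lambda>v. v $ j) \<circ> Y)"
    by (rule indep_var_compose[OF ind mi mi])
  then have ind': "indep_var borel (\<lambda>\<omega>. X \<omega> $ i) borel (\<lambda>\<omega>. Y \<omega> $ j)" by (simp add: comp_def)
  have "(\<integral>\<omega>. X \<omega> $ i * Y \<omega> $ j \<partial>M) = (\<integral>\<omega>. X \<omega> $ i \<partial>M) * (\<integral>\<omega>. Y \<omega> $ j \<partial>M)"
    by (rule indep_var_lebesgue_integral[OF ind' L2_nth[OF X] L2_nth[OF Y]])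
  also have "\<dots> = 0" using m by (simp add: mean_nth[OF Y])
  finally show "(\<integral>\<omega>. X \<omega> $ i * Y \<omega> $ j \<partial>M) = 0" .
qed

lemma const_unc:
  fixes Y :: "'a \<Rightarrow> real^'n"
  assumes Y: "L2 M Y" and m: "(\<integral>\<omega>. Y \<omega> \<partial>M) = 0"
  shows "unc M (\<lambda>_. c) Y"
  unfolding unc_def using m by (simp add: mean_nth[OF Y])

lemma mom_distr:
  fixes X Y :: "'a \<Rightarrow> real^'n"
  assumes d: "distr M borel X = distr M borel Y" and X: "X \<in> borel_measurable M" and Y: "Y \<in> borel_measurable M"
  shows "(\<integral>\<omega>. outer (X \<omega>) \<partial>M) = (\<integral>\<omega>. outer (Y \<omega>) \<partial>M)"
proof -
  have mo: "outer \<in> borel_measurable borel" by (rule borel_measurable_continuous_onI[OF cont_outer])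
  have "(\<integral>\<omega>. outer (X \<omega>) \<partial>M) = (\<integral>x. outer x \<partial>distr M borel X)"
    by (rule integral_distr[OF X mo, symmetric])
  also have "\<dots> = (\<integral>x. outer x \<partial>distr M borel Y)" by (simp add: d)
  also have "\<dots> = (\<integral>\<omega>. outer (Y \<omega>) \<partial>M)" by (rule integral_distr[OF Y mo])
  finally show ?thesis .
qed

lemma traj_props:
  fixes eps :: "nat \<Rightarrow> 'a \<Rightarrow> real^'d"
  assumes ng: "noise_good M eps" and x0: "L2 M x0" and u0: "\<And>r. r \<ge> 1 \<Longrightarrow> unc M x0 (eps r)"
  shows "L2 M (traj N eps x0 t) \<and> (\<forall>r>t. unc M (traj N eps x0 t) (eps r))"
proof (induction t)
  case 0
  then show ?case using x0 u0 by simp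
next
  case (Suc t)
  have L: "\<And>t. L2 M (eps t)" using ng by (rule ng_L2)
  have ue: "unc M (eps s) (eps r)" if "s \<noteq> r" "r \<ge> 1" for s r
    by (rule indep_unc[OF ng_indep[OF ng that(1)] L L ng_mean[OF ng that(2)]])
  show ?case
  proof
    show "L2 M (traj N eps x0 (Suc t))"
      using L2_affine[OF Suc.IH[THEN conjunct1] L] by simp
    show "\<forall>r>Suc t. unc M (traj N eps x0 (Suc t)) (eps r)"
    proof (intro allI impI)
      fix r assume r: "Suc t < r"
      show "unc M (traj N eps x0 (Suc t)) (eps r)"
      proof -
        have "unc M (\<lambda>\<omega>. N *v traj N eps x0 t \<omega> + eps (Suc t) \<omega>) (eps r)"
          by (rule unc_affine[OF Suc.IH[THEN conjunct1] L L]) (use Suc.IH r ue[of "Suc t" r] in auto)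
        then show ?thesis by simp
      qed
    qed
  qed
qed

lemma traj_mom:
  fixes eps :: "nat \<Rightarrow> 'a \<Rightarrow> real^'d"
  assumes ng: "noise_good M eps" and x0: "L2 M x0" and u0: "\<And>r. r \<ge> 1 \<Longrightarrow> unc M x0 (eps r)"
  shows "(\<integral>\<omega>. outer (traj N eps x0 t \<omega>) \<partial>M) = lyrec N (\<integral>\<omega>. outer (eps 1 \<omega>) \<partial>M) (\<integral>\<omega>. outer (x0 \<omega>) \<partial>M) t"
proof (induction t)
  case 0
  then show ?case by simp
next
  case (Suc t)
  have L: "\<And>t. L2 M (eps t)" using ng by (rule ng_L2)
  have tp: "L2 M (traj N eps x0 t)" "unc M (traj N eps x0 t) (eps (Suc t))"
    using traj_props[OF ng x0 u0, where t=t] by auto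
  have d: "(\<integral>\<omega>. outer (eps (Suc t) \<omega>) \<partial>M) = (\<integral>\<omega>. outer (eps 1 \<omega>) \<partial>M)"
    by (rule mom_distr[OF ng_distr[OF ng]]) (use L in \<open>auto simp: L2_def\<close>)
  show ?case
    using mom_step[OF tp(1) L tp(2)] Suc.IH d by simp
qed

end

lemma integral_suminf_L1:
  fixes f :: "nat \<Rightarrow> 'a \<Rightarrow> 'b::{banach, second_countable_topology}"
  assumes int: "\<And>i. integrable M (f i)" and s: "summable (\<lambda>i. \<integral>x. norm (f i x) \<partial>M)"
  shows "(\<integral>x. (\<Sum>i. f i x) \<partial>M) = (\<Sum>i. integral\<^sup>L M (f i))"
proof (rule integral_suminf[OF int _ s])
  have meas: "\<And>i. (\<lambda>x. ennreal (norm (f i x))) \<in> borel_measurable M"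
    using int by (intro measurable_compose[OF borel_measurable_integrable[OF int]]) auto
  have "(\<integral>\<^sup>+x. (\<Sum>i. ennreal (norm (f i x))) \<partial>M) = (\<Sum>i. \<integral>\<^sup>+x. ennreal (norm (f i x)) \<partial>M)"
    by (rule nn_integral_suminf[OF meas])
  also have "\<dots> = (\<Sum>i. ennreal (\<integral>x. norm (f i x) \<partial>M))"
    by (intro suminf_cong nn_integral_eq_integral integrable_norm int) auto
  also have "\<dots> = ennreal (\<Sum>i. \<integral>x. norm (f i x) \<partial>M)"
    by (rule suminf_ennreal2[OF _ s]) simp
  finally have "(\<integral>\<^sup>+x. (\<Sum>i. ennreal (norm (f i x))) \<partial>M) < \<infinity>" by simp
  then have "AE x in M. (\<Sum>i. ennreal (norm (f i x))) < \<infinity>"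
    by (intro finite_nn_integral_imp_ae_finite) (use meas in measurable)
  then show "AE x in M. summable (\<lambda>i. norm (f i x))"
    by eventually_elim (auto intro: summable_suminf_not_top)
qed

context prob_space
begin

lemma int_norm_outer:
  fixes X :: "'a \<Rightarrow> real^'n" assumes X: "L2 M X"
  shows "(\<integral>\<omega>. norm (outer (X \<omega>)) \<partial>M) \<le> real CARD('n) * norm (\<integral>\<omega>. outer (X \<omega>) \<partial>M)"
proof -
  have "(\<integral>\<omega>. norm (outer (X \<omega>)) \<partial>M) = (\<integral>\<omega>. (\<Sum>i\<in>UNIV. X \<omega> $ i * X \<omega> $ i) \<partial>M)"
    unfolding norm_outer norm_sq_entries by (simp only: power2_eq_square)
  also have "\<dots> = (\<Sum>i\<in>UNIV. (\<integral>\<omega>. X \<omega> $ i * X \<omega> $ i \<partial>M))"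
    by (rule Bochner_Integration.integral_sum) (rule L2_prod[OF X X])
  also have "\<dots> = (\<Sum>i\<in>UNIV. (\<integral>\<omega>. outer (X \<omega>) \<partial>M) $ i $ i)"
    by (simp add: outer_entry[OF X])
  also have "\<dots> \<le> (\<Sum>i\<in>(UNIV::'n set). norm (\<integral>\<omega>. outer (X \<omega>) \<partial>M))"
    by (rule sum_mono, rule order_trans[OF abs_ge_self order_trans[OF component_le_norm_cart Finite_Cartesian_Product.norm_nth_le]])
  finally show ?thesis by simp
qed

lemma traj_series:
  fixes eps :: "nat \<Rightarrow> 'a \<Rightarrow> real^'d"
  assumes ng: "noise_good M eps" and x0: "L2 M x0" and u0: "\<And>r. r \<ge> 1 \<Longrightarrow> unc M x0 (eps r)"
    and c: "\<And>v. norm (N *v v) \<le> c * norm v" and c0: "0 \<le> c" and g0: "0 \<le> \<gamma>" and g1: "\<gamma> < 1" and gc: "\<gamma> * c^2 < 1"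
  shows "summable (\<lambda>t. \<integral>\<omega>. norm (\<gamma>^t *\<^sub>R outer (traj N eps x0 t \<omega>)) \<partial>M)"
    and "\<And>t. integrable M (\<lambda>\<omega>. \<gamma>^t *\<^sub>R outer (traj N eps x0 t \<omega>))"
    and "\<And>t. (\<integral>\<omega>. \<gamma>^t *\<^sub>R outer (traj N eps x0 t \<omega>) \<partial>M) = \<gamma>^t *\<^sub>R lyrec N (\<integral>\<omega>. outer (eps 1 \<omega>) \<partial>M) (\<integral>\<omega>. outer (x0 \<omega>) \<partial>M) t"
proof -
  let ?S1 = "\<integral>\<omega>. outer (eps 1 \<omega>) \<partial>M" and ?V = "\<integral>\<omega>. outer (x0 \<omega>) \<partial>M"
  have L: "\<And>t. L2 M (traj N eps x0 t)" using traj_props[OF ng x0 u0] by blast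
  show int: "\<And>t. integrable M (\<lambda>\<omega>. \<gamma>^t *\<^sub>R outer (traj N eps x0 t \<omega>))"
    by (intro integrable_scaleR_right L2_outer L)
  show "\<And>t. (\<integral>\<omega>. \<gamma>^t *\<^sub>R outer (traj N eps x0 t \<omega>) \<partial>M) = \<gamma>^t *\<^sub>R lyrec N ?S1 ?V t"
    by (simp add: traj_mom[OF ng x0 u0])
  define b where "b = max \<gamma> (\<gamma> * c^2)"
  have sn: "summable (\<lambda>t. norm (\<gamma>^t *\<^sub>R lyrec N ?S1 ?V t))"
    by (rule lyrec_summable[OF c c0 g0, of b]) (use g1 gc in \<open>auto simp: b_def\<close>)
  show "summable (\<lambda>t. \<integral>\<omega>. norm (\<gamma>^t *\<^sub>R outer (traj N eps x0 t \<omega>)) \<partial>M)"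
  proof (rule summable_comparison_test[OF _ summable_mult[OF sn, of "real CARD('d)"]], intro exI allI impI)
    fix t :: nat
    have "(\<integral>\<omega>. norm (\<gamma>^t *\<^sub>R outer (traj N eps x0 t \<omega>)) \<partial>M) = \<gamma>^t * (\<integral>\<omega>. norm (outer (traj N eps x0 t \<omega>)) \<partial>M)"
      using g0 by simp
    also have "\<dots> \<le> \<gamma>^t * (real CARD('d) * norm (lyrec N ?S1 ?V t))"
      using int_norm_outer[OF L[of t]] g0 by (simp add: traj_mom[OF ng x0 u0] mult_left_mono)
    finally have *: "(\<integral>\<omega>. norm (\<gamma>^t *\<^sub>R outer (traj N eps x0 t \<omega>)) \<partial>M) \<le> real CARD('d) * norm (\<gamma>^t *\<^sub>R lyrec N ?S1 ?V t)"
      using g0 by (simp add: algebra_simps)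
    have "0 \<le> (\<integral>\<omega>. norm (\<gamma>^t *\<^sub>R outer (traj N eps x0 t \<omega>)) \<partial>M)" by simp
    then show "norm (\<integral>\<omega>. norm (\<gamma>^t *\<^sub>R outer (traj N eps x0 t \<omega>)) \<partial>M) \<le> real CARD('d) * norm (\<gamma>^t *\<^sub>R lyrec N ?S1 ?V t)"
      using * by simp
  qed
qed

end

lemma lyrec_split: "lyrec N W V t = lyrec N 0 V t + lyrec N W 0 t"
  by (induction t) (simp_all add: matrix_add_ldistrib mat_radd)

lemma lyrec_add0: "lyrec N 0 (V + V') t = lyrec N 0 V t + lyrec N 0 V' t"
  by (induction t) (simp_all add: matrix_add_ldistrib mat_radd)

lemma lyrec_scale0: "lyrec N 0 (a *\<^sub>R V) t = a *\<^sub>R lyrec N 0 V t"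
  by (induction t) (simp_all add: sc_out1 sc_out2)

lemma bl_bound_trace: obtains K where "K > 0" "\<And>Y::real^'n^'m. norm (trace ((S::real^'m^'n) ** Y)) \<le> norm Y * K"
  using bounded_linear.pos_bounded[OF bl_trace_mult[of S]] by blast

lemma trace_series_summable:
  assumes c: "\<And>v. norm (N *v v) \<le> c * norm v" and c0: "0 \<le> c" and g0: "0 \<le> \<gamma>" and g1: "\<gamma> < 1" and gc: "\<gamma> * c^2 < 1"
  shows "summable (\<lambda>t. \<gamma>^t * trace (S ** lyrec N W V t))"
proof -
  define b where "b = max \<gamma> (\<gamma> * c^2)"
  have sn: "summable (\<lambda>t. norm (\<gamma>^t *\<^sub>R lyrec N W V t))"
    by (rule lyrec_summable[OF c c0 g0, of b]) (use g1 gc in \<open>auto simp: b_def\<close>)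
  obtain K where K: "K > 0" "\<And>Y. norm (trace (S ** Y)) \<le> norm Y * K" using bl_bound_trace by blast
  have "summable (\<lambda>t. norm (\<gamma>^t * trace (S ** lyrec N W V t)))"
  proof (rule summable_comparison_test[OF _ summable_mult2[OF sn, of K]], intro exI allI impI)
    fix t :: nat
    have eq: "\<gamma>^t * trace (S ** lyrec N W V t) = trace (S ** (\<gamma>^t *\<^sub>R lyrec N W V t))"
      by (simp add: sc_out2 trace_scaleR)
    have "norm (\<gamma>^t * trace (S ** lyrec N W V t)) \<le> norm (\<gamma>^t *\<^sub>R lyrec N W V t) * K"
      unfolding eq by (rule K(2))
    then show "norm (norm (\<gamma>^t * trace (S ** lyrec N W V t))) \<le> norm (\<gamma>^t *\<^sub>R lyrec N W V t) * K"
      by simp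
  qed
  then show ?thesis by (rule summable_norm_cancel)
qed

definition Lf :: "real^'n^'n \<Rightarrow> real \<Rightarrow> real^'n^'n \<Rightarrow> real^'n^'n \<Rightarrow> real" where
  "Lf N \<gamma> S V = (\<Sum>t. \<gamma>^t * trace (S ** lyrec N 0 V t))"

lemma Lf_linear:
  fixes N :: "real^'n^'n"
  assumes c: "\<And>v. norm (N *v v) \<le> c * norm v" and c0: "0 \<le> c" and g0: "0 \<le> \<gamma>" and g1: "\<gamma> < 1" and gc: "\<gamma> * c^2 < 1"
  shows "bounded_linear (Lf N \<gamma> S)"
proof -
  note s = trace_series_summable[OF c c0 g0 g1 gc]
  have "linear (Lf N \<gamma> S)"
  proof (rule linearI)
    fix V V' :: "real^'n^'n" and a :: real
    show "Lf N \<gamma> S (V + V') = Lf N \<gamma> S V + Lf N \<gamma> S V'"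
      unfolding Lf_def lyrec_add0 using suminf_add[OF s s]
      by (simp add: matrix_add_ldistrib trace_add distrib_left)
    show "Lf N \<gamma> S (a *\<^sub>R V) = a *\<^sub>R Lf N \<gamma> S V"
      unfolding Lf_def lyrec_scale0 using suminf_mult[OF s, of a]
      by (simp add: sc_out2 trace_scaleR mult_ac)
  qed
  then show ?thesis by (simp add: linear_conv_bounded_linear)
qed

lemma F_affine:
  assumes c: "\<And>v. norm (N *v v) \<le> c * norm v" and c0: "0 \<le> c" and g0: "0 \<le> \<gamma>" and g1: "\<gamma> < 1" and gc: "\<gamma> * c^2 < 1"
  shows "(\<Sum>t. \<gamma>^t * trace (S ** lyrec N W V t)) = Lf N \<gamma> S V + (\<Sum>t. \<gamma>^t * trace (S ** lyrec N W 0 t))"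
  unfolding Lf_def
  using suminf_add[OF trace_series_summable[OF c c0 g0 g1 gc, of S 0 V] trace_series_summable[OF c c0 g0 g1 gc, of S W 0]]
  by (subst lyrec_split) (simp add: matrix_add_ldistrib trace_add distrib_left)

lemma suminf_bl_integral:
  fixes F :: "nat \<Rightarrow> 'a \<Rightarrow> 'b::{banach, second_countable_topology}" and T :: "'b \<Rightarrow> 'c::{banach, second_countable_topology}"
  assumes T: "bounded_linear T" and int: "\<And>t. integrable M (F t)" and s: "summable (\<lambda>t. \<integral>\<omega>. norm (F t \<omega>) \<partial>M)"
  shows "(\<integral>\<omega>. (\<Sum>t. T (F t \<omega>)) \<partial>M) = (\<Sum>t. T (\<integral>\<omega>. F t \<omega> \<partial>M))"
proof -
  obtain K where K: "K > 0" "\<And>x. norm (T x) \<le> norm x * K" using bounded_linear.pos_bounded[OF T] by blast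
  have int': "\<And>t. integrable M (\<lambda>\<omega>. T (F t \<omega>))" by (rule integrable_bounded_linear[OF T int])
  have "summable (\<lambda>t. \<integral>\<omega>. norm (T (F t \<omega>)) \<partial>M)"
  proof (rule summable_comparison_test[OF _ summable_mult2[OF s, of K]], intro exI allI impI)
    fix t :: nat
    have "(\<integral>\<omega>. norm (T (F t \<omega>)) \<partial>M) \<le> (\<integral>\<omega>. norm (F t \<omega>) * K \<partial>M)"
      by (rule integral_mono) (use int int' K in auto)
    also have "\<dots> = (\<integral>\<omega>. norm (F t \<omega>) \<partial>M) * K" by simp
    finally show "norm (\<integral>\<omega>. norm (T (F t \<omega>)) \<partial>M) \<le> (\<integral>\<omega>. norm (F t \<omega>) \<partial>M) * K"
      by (simp add: integral_nonneg_AE)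
  qed
  then have "(\<integral>\<omega>. (\<Sum>t. T (F t \<omega>)) \<partial>M) = (\<Sum>t. \<integral>\<omega>. T (F t \<omega>) \<partial>M)"
    by (rule integral_suminf_L1[OF int'])
  also have "\<dots> = (\<Sum>t. T (\<integral>\<omega>. F t \<omega> \<partial>M))"
    by (simp add: integral_bounded_linear[OF T int])
  finally show ?thesis .
qed

context prob_space
begin

lemma eps0_unc:
  fixes eps :: "nat \<Rightarrow> 'a \<Rightarrow> real^'d"
  assumes ng: "noise_good M eps" and r: "r \<ge> 1"
  shows "unc M (eps 0) (eps r)"
  by (rule indep_unc[OF ng_indep[OF ng] ng_L2[OF ng] ng_L2[OF ng] ng_mean[OF ng r]]) (use r in simp)

lemma Sigma_repr:
  fixes eps :: "nat \<Rightarrow> 'a \<Rightarrow> real^'d"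
  assumes ng: "noise_good M eps"
    and c: "\<And>v. norm (N *v v) \<le> c * norm v" and c0: "0 \<le> c" and g0: "0 \<le> \<gamma>" and g1: "\<gamma> < 1" and gc: "\<gamma> * c^2 < 1"
  shows "Sigma_mat M eps \<gamma> N = (\<Sum>t. \<gamma>^t *\<^sub>R lyrec N (\<integral>\<omega>. outer (eps 1 \<omega>) \<partial>M) (\<integral>\<omega>. outer (eps 0 \<omega>) \<partial>M) t)"
proof -
  note ts = traj_series[OF ng ng_L2[OF ng] eps0_unc[OF ng] c c0 g0 g1 gc]
  have "Sigma_mat M eps \<gamma> N = (\<Sum>t. \<integral>\<omega>. \<gamma>^t *\<^sub>R outer (traj N eps (eps 0) t \<omega>) \<partial>M)"
    unfolding Sigma_mat_def by (rule integral_suminf_L1[OF ts(2) ts(1)])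
  then show ?thesis by (simp only: ts(3))
qed

lemma cond_repr:
  fixes eps :: "nat \<Rightarrow> 'a \<Rightarrow> real^'d"
  assumes ng: "noise_good M eps"
    and c: "\<And>v. norm (N *v v) \<le> c * norm v" and c0: "0 \<le> c" and g0: "0 \<le> \<gamma>" and g1: "\<gamma> < 1" and gc: "\<gamma> * c^2 < 1"
  shows "(\<integral>\<omega>. (\<Sum>t. \<gamma>^t * trace (S ** outer (traj N eps (\<lambda>_. x0) t \<omega>))) \<partial>M)
       = (\<Sum>t. \<gamma>^t * trace (S ** lyrec N (\<integral>\<omega>. outer (eps 1 \<omega>) \<partial>M) (outer x0) t))"
proof -
  have u0: "\<And>r. r \<ge> 1 \<Longrightarrow> unc M (\<lambda>_. x0) (eps r)"
    by (rule const_unc[OF ng_L2[OF ng] ng_mean[OF ng]])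
  note ts = traj_series[OF ng L2_const u0 c c0 g0 g1 gc]
  have eq: "\<gamma>^t * trace (S ** outer (traj N eps (\<lambda>_. x0) t \<omega>)) = trace (S ** (\<gamma>^t *\<^sub>R outer (traj N eps (\<lambda>_. x0) t \<omega>)))" for t \<omega>
    by (simp add: sc_out2 trace_scaleR)
  have "(\<integral>\<omega>. (\<Sum>t. \<gamma>^t * trace (S ** outer (traj N eps (\<lambda>_. x0) t \<omega>))) \<partial>M)
      = (\<Sum>t. trace (S ** (\<integral>\<omega>. \<gamma>^t *\<^sub>R outer (traj N eps (\<lambda>_. x0) t \<omega>) \<partial>M)))"
    unfolding eq by (rule suminf_bl_integral[OF bl_trace_mult ts(2) ts(1)])
  also have "\<dots> = (\<Sum>t. \<gamma>^t * trace (S ** lyrec N (\<integral>\<omega>. outer (eps 1 \<omega>) \<partial>M) (outer x0) t))"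
    by (simp only: ts(3)) (simp add: sc_out2 trace_scaleR prob_space)
  finally show ?thesis .
qed

lemma init_repr:
  fixes eps :: "nat \<Rightarrow> 'a \<Rightarrow> real^'d"
  assumes ng: "noise_good M eps"
    and c: "\<And>v. norm (N *v v) \<le> c * norm v" and c0: "0 \<le> c" and g0: "0 \<le> \<gamma>" and g1: "\<gamma> < 1" and gc: "\<gamma> * c^2 < 1"
  shows "(\<integral>x0. (\<Sum>t. \<gamma>^t * trace (S ** lyrec N (\<integral>\<omega>. outer (eps 1 \<omega>) \<partial>M) (outer x0) t)) \<partial>distr M borel (eps 0))
       = trace (S ** Sigma_mat M eps \<gamma> N)"
proof -
  let ?S1 = "\<integral>\<omega>. outer (eps 1 \<omega>) \<partial>M" and ?S0 = "\<integral>\<omega>. outer (eps 0 \<omega>) \<partial>M"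
  define C where "C = (\<Sum>t. \<gamma>^t * trace (S ** lyrec N ?S1 0 t))"
  note Fa = F_affine[OF c c0 g0 g1 gc, of S ?S1]
  note bl = Lf_linear[OF c c0 g0 g1 gc, of S]
  have Fx: "\<And>V. (\<Sum>t. \<gamma>^t * trace (S ** lyrec N ?S1 V t)) = Lf N \<gamma> S V + C"
    unfolding C_def by (rule Fa)
  have L0: "L2 M (eps 0)" by (rule ng_L2[OF ng])
  have meas: "(\<lambda>x. Lf N \<gamma> S (outer x) + C) \<in> borel_measurable borel"
  proof (rule borel_measurable_continuous_onI)
    have "continuous_on UNIV (\<lambda>x. Lf N \<gamma> S (outer x))"
      by (rule continuous_on_compose2[OF linear_continuous_on[OF bl] cont_outer]) auto
    then show "continuous_on UNIV (\<lambda>x. Lf N \<gamma> S (outer x) + C)"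
      by (intro continuous_on_add continuous_on_const)
  qed
  have "(\<integral>x0. (\<Sum>t. \<gamma>^t * trace (S ** lyrec N ?S1 (outer x0) t)) \<partial>distr M borel (eps 0))
      = (\<integral>x0. Lf N \<gamma> S (outer x0) + C \<partial>distr M borel (eps 0))"
    by (intro Bochner_Integration.integral_cong refl Fx)
  also have "\<dots> = (\<integral>\<omega>. Lf N \<gamma> S (outer (eps 0 \<omega>)) + C \<partial>M)"
    by (rule integral_distr[OF _ meas]) (use L0 in \<open>simp add: L2_def\<close>)
  also have "\<dots> = Lf N \<gamma> S ?S0 + C"
    using integrable_bounded_linear[OF bl L2_outer[OF L0]]
    by (simp add: Bochner_Integration.integral_add integral_bounded_linear[OF bl L2_outer[OF L0]] prob_space)
  also have "\<dots> = (\<Sum>t. \<gamma>^t * trace (S ** lyrec N ?S1 ?S0 t))"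
    by (rule Fx[symmetric])
  also have "\<dots> = (\<Sum>t. trace (S ** (\<gamma>^t *\<^sub>R lyrec N ?S1 ?S0 t)))"
    by (simp add: sc_out2 trace_scaleR)
  also have "\<dots> = trace (S ** (\<Sum>t. \<gamma>^t *\<^sub>R lyrec N ?S1 ?S0 t))"
    by (rule bounded_linear.suminf[OF bl_trace_mult lyrec_sum_eq(1)[OF c c0 g0 g1 gc], symmetric])
  also have "\<dots> = trace (S ** Sigma_mat M eps \<gamma> N)"
    by (simp add: Sigma_repr[OF ng c c0 g0 g1 gc])
  finally show ?thesis .
qed

end

lemma continuous_on_matmul:
  fixes f :: "'a::topological_space \<Rightarrow> real^'n^'m" and g :: "'a \<Rightarrow> real^'p^'n"
  assumes "continuous_on A f" "continuous_on A g"
  shows "continuous_on A (\<lambda>x. f x ** g x)"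
  unfolding matrix_matrix_mult_def using assms by (intro continuous_intros)

lemma continuous_on_transpose:
  fixes f :: "'a::topological_space \<Rightarrow> real^'n^'m"
  assumes "continuous_on A f"
  shows "continuous_on A (\<lambda>x. transpose (f x))"
  unfolding transpose_def using assms by (intro continuous_intros)

lemma continuous_lyrec:
  fixes Mf :: "real \<Rightarrow> real^'n^'n"
  assumes "continuous_on A Mf"
  shows "continuous_on A (\<lambda>s. lyrec (Mf s) W V t)"
  by (induction t) (simp_all add: continuous_on_const continuous_on_add continuous_on_matmul continuous_on_transpose assms)

lemma small_delta:
  fixes c nv \<gamma> :: real
  assumes "\<gamma> * c^2 < 1" "0 \<le> c" "0 \<le> nv" "0 \<le> \<gamma>"
  shows "\<exists>\<delta>>0. \<gamma> * (c + \<delta> * nv)^2 < 1"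
proof -
  have "((\<lambda>\<delta>. \<gamma> * (c + \<delta> * nv)^2) \<longlongrightarrow> \<gamma> * (c + 0 * nv)^2) (at_right 0)"
    by (intro tendsto_intros)
  then have "eventually (\<lambda>\<delta>. \<gamma> * (c + \<delta> * nv)^2 < 1) (at_right 0)"
    using assms(1) by (intro order_tendstoD(2)) auto
  then obtain b where b: "b > 0" and h: "\<And>y. y > 0 \<Longrightarrow> y < b \<Longrightarrow> \<gamma> * (c + y * nv)^2 < 1"
    unfolding eventually_at_right_field by auto
  show ?thesis
  proof (intro exI conjI)
    show "b/2 > 0" using b by simp
    show "\<gamma> * (c + b/2 * nv)^2 < 1" by (rule h) (use b in auto)
  qed
qed

lemma scaleR_mv: "(s *\<^sub>R (V::real^'n^'m)) *v v = s *\<^sub>R (V *v v)"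
  by (simp add: vec_eq_iff matrix_vector_mult_def sum_distrib_left mult.assoc)

lemma perturb_bound:
  fixes Mk V :: "real^'n^'n"
  assumes c: "\<And>v. norm (Mk *v v) \<le> c * norm v" and s: "\<bar>s\<bar> \<le> \<delta>"
  shows "norm ((Mk + s *\<^sub>R V) *v v) \<le> (c + \<delta> * opnorm V) * norm v"
proof -
  have "norm ((Mk + s *\<^sub>R V) *v v) = norm (Mk *v v + s *\<^sub>R (V *v v))"
    by (simp add: matrix_vector_mult_add_rdistrib scaleR_mv)
  also have "\<dots> \<le> norm (Mk *v v) + \<bar>s\<bar> * norm (V *v v)"
    using norm_triangle_ineq[of "Mk *v v" "s *\<^sub>R (V *v v)"] by simp
  also have "\<dots> \<le> c * norm v + \<delta> * (opnorm V * norm v)"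
    using order_trans[OF abs_ge_zero s] by (intro add_mono c mult_mono s mv_opnorm) auto
  finally show ?thesis by (simp add: algebra_simps)
qed

lemma sigma_cont:
  fixes Mk V W V0 :: "real^'n^'n"
  assumes c: "\<And>v. norm (Mk *v v) \<le> c * norm v" and c0: "0 \<le> c" and g0: "0 \<le> \<gamma>" and g1: "\<gamma> < 1" and gc: "\<gamma> * c^2 < 1"
  obtains \<delta> where "\<delta> > 0" "\<gamma> * (c + \<delta> * opnorm V)^2 < 1"
    and "((\<lambda>s. (\<Sum>t. \<gamma>^t *\<^sub>R lyrec (Mk + s *\<^sub>R V) W V0 t)) \<longlongrightarrow> (\<Sum>t. \<gamma>^t *\<^sub>R lyrec Mk W V0 t)) (at 0)"
proof -
  obtain \<delta> where d0: "\<delta> > 0" and dg: "\<gamma> * (c + \<delta> * opnorm V)^2 < 1"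
    using small_delta[OF gc c0 opnorm_nonneg g0] by blast
  define c' where "c' = c + \<delta> * opnorm V"
  have c'0: "0 \<le> c'" unfolding c'_def using c0 d0 opnorm_nonneg[of V] by simp
  define b where "b = max \<gamma> (\<gamma> * c'^2)"
  have b1: "b < 1" using g1 dg by (simp add: b_def c'_def)
  have b0: "0 \<le> b" using g0 by (simp add: b_def)
  let ?A = "cball (0::real) \<delta>"
  have bnd: "norm (\<gamma>^t *\<^sub>R lyrec (Mk + s *\<^sub>R V) W V0 t) \<le> (norm V0 + real t * norm W) * b^t" if "s \<in> ?A" for t s
  proof -
    have "\<bar>s\<bar> \<le> \<delta>" using that by simp
    then have cs: "\<And>v. norm ((Mk + s *\<^sub>R V) *v v) \<le> c' * norm v"
      unfolding c'_def by (rule perturb_bound[OF c])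
    show ?thesis
      using lyrec_bound[OF cs c'0 g0, of b t W V0] g0 by (simp add: b_def)
  qed
  have sm: "summable (\<lambda>t. (norm V0 + real t * norm W) * b^t)"
    using summable_add[OF summable_mult[OF summable_geometric[of b], of "norm V0"] summable_mult[OF summable_nat_pow[OF b0 b1], of "norm W"]]
      b0 b1 by (simp add: algebra_simps)
  have ul: "uniform_limit ?A (\<lambda>n s. \<Sum>t<n. \<gamma>^t *\<^sub>R lyrec (Mk + s *\<^sub>R V) W V0 t) (\<lambda>s. \<Sum>t. \<gamma>^t *\<^sub>R lyrec (Mk + s *\<^sub>R V) W V0 t) sequentially"
    by (rule Weierstrass_m_test[OF bnd sm])
  have "continuous_on ?A (\<lambda>s. \<Sum>t. \<gamma>^t *\<^sub>R lyrec (Mk + s *\<^sub>R V) W V0 t)"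
  proof (rule uniform_limit_theorem[OF _ ul])
    show "\<forall>\<^sub>F n in sequentially. continuous_on ?A (\<lambda>s. \<Sum>t<n. \<gamma>^t *\<^sub>R lyrec (Mk + s *\<^sub>R V) W V0 t)"
      by (intro always_eventually allI continuous_on_sum continuous_on_scaleR continuous_on_const continuous_lyrec
          continuous_on_add continuous_on_id)
  qed simp
  then have "isCont (\<lambda>s. \<Sum>t. \<gamma>^t *\<^sub>R lyrec (Mk + s *\<^sub>R V) W V0 t) 0"
    by (rule continuous_on_interior) (use d0 in simp)
  then have "((\<lambda>s. (\<Sum>t. \<gamma>^t *\<^sub>R lyrec (Mk + s *\<^sub>R V) W V0 t)) \<longlongrightarrow> (\<Sum>t. \<gamma>^t *\<^sub>R lyrec Mk W V0 t)) (at 0)"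
    unfolding isCont_def by simp
  with d0 dg that show ?thesis by blast
qed

lemma opnorm_le: assumes "\<And>v. norm (N *v v) \<le> c * norm v" "0 \<le> c" shows "opnorm N \<le> c"
  unfolding opnorm_def by (rule onorm_bound) (use assms in auto)

lemma linear_transpose: "linear (transpose :: real^'n^'m \<Rightarrow> real^'m^'n)"
  by (rule linearI) (simp_all add: transpose_add transpose_scalar)

lemma bl_transpose: "bounded_linear (transpose :: real^'n^'m \<Rightarrow> real^'m^'n)"
  using linear_transpose linear_conv_bounded_linear by blast

lemma lyrec_sym: "transpose W = W \<Longrightarrow> transpose V = V \<Longrightarrow> transpose (lyrec N W V t) = lyrec N W V t"
  by (induction t) (simp_all add: transpose_add matrix_transpose_mul matrix_mul_assoc)

lemma (in prob_space) mom_sym: fixes X :: "'a \<Rightarrow> real^'n" assumes "L2 M X"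
  shows "transpose (\<integral>\<omega>. outer (X \<omega>) \<partial>M) = (\<integral>\<omega>. outer (X \<omega>) \<partial>M)"
  using integral_bounded_linear[OF bl_transpose L2_outer[OF assms]] by (simp add: outer_sym)

lemma (in prob_space) sigma_sym:
  fixes eps :: "nat \<Rightarrow> 'a \<Rightarrow> real^'d"
  assumes ng: "noise_good M eps"
    and c: "\<And>v. norm (N *v v) \<le> c * norm v" and c0: "0 \<le> c" and g0: "0 \<le> \<gamma>" and g1: "\<gamma> < 1" and gc: "\<gamma> * c^2 < 1"
  shows "transpose (Sigma_mat M eps \<gamma> N) = Sigma_mat M eps \<gamma> N"
proof -
  note s = lyrec_sum_eq(1)[OF c c0 g0 g1 gc, of "\<integral>\<omega>. outer (eps 1 \<omega>) \<partial>M" "\<integral>\<omega>. outer (eps 0 \<omega>) \<partial>M"]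
  show ?thesis
    unfolding Sigma_repr[OF ng c c0 g0 g1 gc] bounded_linear.suminf[OF bl_transpose s]
    by (simp add: transpose_scalar lyrec_sym mom_sym ng_L2[OF ng])
qed

lemma grad_generic:
  fixes eps :: "nat \<Rightarrow> 'a \<Rightarrow> real^'d" and M0 :: "real^'d^'d" and B :: "real^'l^'d"
    and K U :: "real^'d^'l" and R :: "real^'l^'l" and S0 :: "real^'d^'d" and J :: "real \<Rightarrow> real"
  assumes ng: "noise_good M eps" and g0: "0 \<le> \<gamma>" and g1: "\<gamma> < 1"
    and Rs: "transpose R = R" and S0s: "transpose S0 = S0"
    and th: "\<gamma> * (opnorm (M0 + B ** K))^2 < 1"
    and J: "\<And>s. \<gamma> * (opnorm (M0 + B ** (K + s *\<^sub>R U)))^2 < 1 \<Longrightarrow>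
       J s = trace ((S0 + transpose (K + s *\<^sub>R U) ** R ** (K + s *\<^sub>R U)) ** Sigma_mat M eps \<gamma> (M0 + B ** (K + s *\<^sub>R U)))"
  defines "P \<equiv> THE P. P = (S0 + transpose K ** R ** K) + \<gamma> *\<^sub>R (transpose (M0 + B ** K) ** P ** (M0 + B ** K))"
  shows "(J has_real_derivative trace ((transpose U ** (R ** K + \<gamma> *\<^sub>R (transpose B ** P ** (M0 + B ** K)))
           + transpose (R ** K + \<gamma> *\<^sub>R (transpose B ** P ** (M0 + B ** K))) ** U) ** Sigma_mat M eps \<gamma> (M0 + B ** K))) (at 0)"
    and "transpose (Sigma_mat M eps \<gamma> (M0 + B ** K)) = Sigma_mat M eps \<gamma> (M0 + B ** K)"
proof -
  interpret prob_space M by (rule ng_prob[OF ng])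
  define Mk where "Mk = M0 + B ** K"
  define V where "V = B ** U"
  define c where "c = opnorm Mk"
  have Ms: "M0 + B ** (K + s *\<^sub>R U) = Mk + s *\<^sub>R V" for s
    by (simp add: Mk_def V_def matrix_add_ldistrib sc_out2)
  have c: "\<And>v. norm (Mk *v v) \<le> c * norm v" unfolding c_def by (rule mv_opnorm)
  have c0: "0 \<le> c" unfolding c_def by (rule opnorm_nonneg)
  have gc: "\<gamma> * c^2 < 1" using th by (simp add: c_def Mk_def)
  let ?S1 = "\<integral>\<omega>. outer (eps 1 \<omega>) \<partial>M" and ?S0 = "\<integral>\<omega>. outer (eps 0 \<omega>) \<partial>M"
  define W where "W = ?S0 + (\<gamma> / (1 - \<gamma>)) *\<^sub>R ?S1"
  obtain \<delta> where d0: "\<delta> > 0" and dg: "\<gamma> * (c + \<delta> * opnorm V)^2 < 1"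
    and lim: "((\<lambda>s. (\<Sum>t. \<gamma>^t *\<^sub>R lyrec (Mk + s *\<^sub>R V) ?S1 ?S0 t)) \<longlongrightarrow> (\<Sum>t. \<gamma>^t *\<^sub>R lyrec Mk ?S1 ?S0 t)) (at 0)"
    using sigma_cont[OF c c0 g0 g1 gc] by blast
  define c' where "c' = c + \<delta> * opnorm V"
  have c'0: "0 \<le> c'" unfolding c'_def using c0 d0 opnorm_nonneg[of V] by simp
  have near: "(\<forall>v. norm ((Mk + s *\<^sub>R V) *v v) \<le> c' * norm v) \<and> \<gamma> * (opnorm (Mk + s *\<^sub>R V))^2 < 1" if s: "\<bar>s\<bar> < \<delta>" for s
  proof
    show cs: "\<forall>v. norm ((Mk + s *\<^sub>R V) *v v) \<le> c' * norm v"
      unfolding c'_def using perturb_bound[OF c, of s \<delta>] s by simp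
    have "opnorm (Mk + s *\<^sub>R V) \<le> c'" by (rule opnorm_le) (use cs c'0 in auto)
    then have "(opnorm (Mk + s *\<^sub>R V))^2 \<le> c'^2" by (intro power_mono opnorm_nonneg)
    then show "\<gamma> * (opnorm (Mk + s *\<^sub>R V))^2 < 1"
      using dg g0 unfolding c'_def by (smt (verit) mult_left_mono)
  qed
  have gc': "\<gamma> * c'^2 < 1" using dg by (simp add: c'_def)
  have evd: "eventually (\<lambda>s. \<bar>s\<bar> < \<delta>) (nhds (0::real))"
    unfolding eventually_nhds_metric using d0 by (auto simp: dist_real_def)
  have sig: "Sigma_mat M eps \<gamma> (Mk + s *\<^sub>R V) = (\<Sum>t. \<gamma>^t *\<^sub>R lyrec (Mk + s *\<^sub>R V) ?S1 ?S0 t)" if "\<bar>s\<bar> < \<delta>" for s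
    using near[OF that] by (intro Sigma_repr[OF ng _ c'0 g0 g1 gc']) auto
  have lyap: "Sigma_mat M eps \<gamma> (Mk + s *\<^sub>R V) = W + \<gamma> *\<^sub>R ((Mk + s *\<^sub>R V) ** Sigma_mat M eps \<gamma> (Mk + s *\<^sub>R V) ** transpose (Mk + s *\<^sub>R V))"
    if "\<bar>s\<bar> < \<delta>" for s
  proof -
    have cs: "\<And>v. norm ((Mk + s *\<^sub>R V) *v v) \<le> c' * norm v" using near[OF that] by auto
    show ?thesis
      unfolding sig[OF that] W_def using lyrec_sum_eq(2)[OF cs c'0 g0 g1 gc', of ?S1 ?S0]
      by (simp add: algebra_simps)
  qed
  have ev: "eventually (\<lambda>s. J s = trace ((S0 + transpose (K + s *\<^sub>R U) ** R ** (K + s *\<^sub>R U)) ** Sigma_mat M eps \<gamma> (M0 + B ** (K + s *\<^sub>R U)))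
          \<and> Sigma_mat M eps \<gamma> (M0 + B ** (K + s *\<^sub>R U)) = W + \<gamma> *\<^sub>R ((M0 + B ** (K + s *\<^sub>R U)) ** Sigma_mat M eps \<gamma> (M0 + B ** (K + s *\<^sub>R U)) ** transpose (M0 + B ** (K + s *\<^sub>R U)))) (nhds 0)"
    using evd
  proof (rule eventually_mono)
    fix s :: real assume s: "\<bar>s\<bar> < \<delta>"
    show "J s = trace ((S0 + transpose (K + s *\<^sub>R U) ** R ** (K + s *\<^sub>R U)) ** Sigma_mat M eps \<gamma> (M0 + B ** (K + s *\<^sub>R U)))
          \<and> Sigma_mat M eps \<gamma> (M0 + B ** (K + s *\<^sub>R U)) = W + \<gamma> *\<^sub>R ((M0 + B ** (K + s *\<^sub>R U)) ** Sigma_mat M eps \<gamma> (M0 + B ** (K + s *\<^sub>R U)) ** transpose (M0 + B ** (K + s *\<^sub>R U)))"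
      unfolding Ms using J[of s] near[OF s] lyap[OF s] by (simp add: Ms)
  qed
  have Xc: "((\<lambda>s. Sigma_mat M eps \<gamma> (M0 + B ** (K + s *\<^sub>R U))) \<longlongrightarrow> Sigma_mat M eps \<gamma> (M0 + B ** (K + 0 *\<^sub>R U))) (at 0)"
  proof -
    have "eventually (\<lambda>s. (\<Sum>t. \<gamma>^t *\<^sub>R lyrec (Mk + s *\<^sub>R V) ?S1 ?S0 t) = Sigma_mat M eps \<gamma> (M0 + B ** (K + s *\<^sub>R U))) (at 0)"
      using evd unfolding eventually_at_filter by (rule eventually_mono) (simp add: Ms sig)
    moreover have "Sigma_mat M eps \<gamma> (M0 + B ** (K + 0 *\<^sub>R U)) = (\<Sum>t. \<gamma>^t *\<^sub>R lyrec Mk ?S1 ?S0 t)"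
      using sig[of 0] d0 by (simp add: Ms Mk_def)
    ultimately show ?thesis using lim by (simp add: tendsto_cong)
  qed
  have Peq: "P = (S0 + transpose K ** R ** K) + \<gamma> *\<^sub>R (transpose (M0 + B ** K) ** P ** (M0 + B ** K))"
    and Psym: "transpose P = P"
  proof -
    have c1: "\<And>v. norm ((M0 + B ** K) *v v) \<le> c * norm v" using c by (simp add: Mk_def)
    have Ss: "transpose (S0 + transpose K ** R ** K) = S0 + transpose K ** R ** K"
      by (simp add: transpose_add matrix_transpose_mul S0s Rs matrix_mul_assoc)
    show "P = (S0 + transpose K ** R ** K) + \<gamma> *\<^sub>R (transpose (M0 + B ** K) ** P ** (M0 + B ** K))"
      unfolding P_def by (rule lyap_the(1)[OF c1 c0 g0 g1 gc])
    show "transpose P = P"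
      unfolding P_def by (rule lyap_the(2)[OF c1 c0 g0 g1 gc Ss])
  qed
  show "(J has_real_derivative trace ((transpose U ** (R ** K + \<gamma> *\<^sub>R (transpose B ** P ** (M0 + B ** K)))
           + transpose (R ** K + \<gamma> *\<^sub>R (transpose B ** P ** (M0 + B ** K))) ** U) ** Sigma_mat M eps \<gamma> (M0 + B ** K))) (at 0)"
    using deriv_core[OF Rs Psym Peq ev Xc] by simp
  show "transpose (Sigma_mat M eps \<gamma> (M0 + B ** K)) = Sigma_mat M eps \<gamma> (M0 + B ** K)"
    using sigma_sym[OF ng c c0 g0 g1 gc] by (simp add: Mk_def)
qed

lemma mv_inner_transpose: "((K::real^'n^'m) *v x) \<bullet> y = x \<bullet> (transpose K *v y)"
  by (simp add: dot_lmul_matrix[symmetric] inner_commute)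

lemma quad_trace: "x \<bullet> (A *v x) = trace (A ** outer (x::real^'n))"
  by (simp add: trace_def matrix_matrix_mult_def outer_def inner_vec_def matrix_vector_mult_def
      sum_distrib_left mult_ac)

lemma stage_trace:
  "stage_cost Q R1 R2 K1 K2 x = trace ((Q + transpose K1 ** R1 ** K1 - transpose K2 ** R2 ** K2) ** outer x)"
proof -
  have a: "(K *v y) \<bullet> (R *v (K *v y)) = y \<bullet> ((transpose K ** R ** K) *v y)" for K :: "real^'n^'m" and R :: "real^'m^'m" and y :: "real^'n"
    by (simp add: mv_inner_transpose matrix_vector_mul_assoc matrix_mul_assoc)
  have "stage_cost Q R1 R2 K1 K2 x = x \<bullet> ((Q + transpose K1 ** R1 ** K1 - transpose K2 ** R2 ** K2) *v x)"
    unfolding stage_cost_def a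
    by (simp only: matrix_vector_mult_add_rdistrib matrix_vector_mult_diff_rdistrib inner_add_right inner_diff_right)
  then show ?thesis by (simp only: quad_trace)
qed

lemma (in prob_space) indep_pair:
  assumes ind: "indep_vars (\<lambda>_. borel) X I" and a: "a \<in> I" and b: "b \<in> I" and ab: "a \<noteq> b"
  shows "indep_var borel (X a) borel (X b)"
proof -
  have "indep_var (PiM {a} (\<lambda>_. borel)) (\<lambda>\<omega>. restrict (\<lambda>i. X i \<omega>) {a}) (PiM {b} (\<lambda>_. borel)) (\<lambda>\<omega>. restrict (\<lambda>i. X i \<omega>) {b})"
    by (rule indep_var_restrict[OF ind]) (use a b ab in auto)
  then have "indep_var borel ((\<lambda>f. f a) \<circ> (\<lambda>\<omega>. restrict (\<lambda>i. X i \<omega>) {a})) borel ((\<lambda>f. f b) \<circ> (\<lambda>\<omega>. restrict (\<lambda>i. X i \<omega>) {b}))"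
    by (rule indep_var_compose) (auto intro: measurable_component_singleton)
  then show ?thesis by (simp add: comp_def)
qed

lemma noise_good_intro:
  assumes "prob_space M" and "\<And>t. eps t \<in> borel_measurable M" and "\<And>t. integrable M (\<lambda>\<omega>. (norm (eps t \<omega>))\<^sup>2)"
    and "\<And>t. t \<ge> 1 \<Longrightarrow> distr M borel (eps t) = distr M borel (eps 1)"
    and "\<And>t. t \<ge> 1 \<Longrightarrow> (\<integral>\<omega>. eps t \<omega> \<partial>M) = 0"
    and "\<And>s r. s \<noteq> r \<Longrightarrow> prob_space.indep_var M borel (eps s) borel (eps r)"
  shows "noise_good M eps"
  unfolding noise_good_def L2_def using assms by blast

lemma noise_ok_good:
  assumes "noise_ok M eps1 eps0"
  shows "noise_good M eps1" and "noise_good M eps0"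
proof -
  have P: "prob_space M" using assms unfolding noise_ok_def by blast
  interpret prob_space M by (rule P)
  define X where "X = (\<lambda>(j::bool, t::nat). if j then eps1 t else eps0 t)"
  have ind: "indep_vars (\<lambda>_. borel) X UNIV" using assms unfolding noise_ok_def X_def by blast
  have h: "\<forall>eps\<in>{eps1, eps0}.
        (\<forall>t. eps t \<in> borel_measurable M \<and> integrable M (\<lambda>\<omega>. (norm (eps t \<omega>))\<^sup>2)) \<and>
        (\<forall>t\<ge>1. distr M borel (eps t) = distr M borel (eps 1) \<and> (\<integral>\<omega>. eps t \<omega> \<partial>M) = 0)"
    using assms unfolding noise_ok_def by blast
  have i1: "indep_var borel (eps1 s) borel (eps1 r)" if "s \<noteq> r" for s r
  proof -
    have "indep_var borel (X (True, s)) borel (X (True, r))"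
      by (rule indep_pair[OF ind]) (use that in auto)
    then show ?thesis by (simp add: X_def)
  qed
  have i0: "indep_var borel (eps0 s) borel (eps0 r)" if "s \<noteq> r" for s r
  proof -
    have "indep_var borel (X (False, s)) borel (X (False, r))"
      by (rule indep_pair[OF ind]) (use that in auto)
    then show ?thesis by (simp add: X_def)
  qed
  have h1: "(\<forall>t. eps1 t \<in> borel_measurable M \<and> integrable M (\<lambda>\<omega>. (norm (eps1 t \<omega>))\<^sup>2)) \<and>
        (\<forall>t\<ge>1. distr M borel (eps1 t) = distr M borel (eps1 1) \<and> (\<integral>\<omega>. eps1 t \<omega> \<partial>M) = 0)"
    using h by (rule bspec) simp
  have h0: "(\<forall>t. eps0 t \<in> borel_measurable M \<and> integrable M (\<lambda>\<omega>. (norm (eps0 t \<omega>))\<^sup>2)) \<and>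
        (\<forall>t\<ge>1. distr M borel (eps0 t) = distr M borel (eps0 1) \<and> (\<integral>\<omega>. eps0 t \<omega> \<partial>M) = 0)"
    using h by (rule bspec) simp
  show "noise_good M eps1"
    by (rule noise_good_intro[OF P]) (use h1 i1 in blast)+
  show "noise_good M eps0"
    by (rule noise_good_intro[OF P]) (use h0 i0 in blast)+
qed

lemma init_cost_eq:
  fixes eps :: "nat \<Rightarrow> 'a \<Rightarrow> real^'d"
  assumes ng: "noise_good M eps" and g0: "0 \<le> \<gamma>" and g1: "\<gamma> < 1"
    and th: "\<gamma> * (opnorm (clmat A B1 B2 K1 K2))^2 < 1"
  shows "init_cost M eps \<gamma> A B1 B2 Q R1 R2 K1 K2 =
     trace ((Q + transpose K1 ** R1 ** K1 - transpose K2 ** R2 ** K2) ** Sigma_mat M eps \<gamma> (clmat A B1 B2 K1 K2))"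
proof -
  interpret prob_space M by (rule ng_prob[OF ng])
  let ?N = "clmat A B1 B2 K1 K2" and ?S = "Q + transpose K1 ** R1 ** K1 - transpose K2 ** R2 ** K2"
  note c = mv_opnorm[of ?N] and c0 = opnorm_nonneg[of ?N]
  have "cond_cost M eps \<gamma> A B1 B2 Q R1 R2 K1 K2 x0 = (\<Sum>t. \<gamma>^t * trace (?S ** lyrec ?N (\<integral>\<omega>. outer (eps 1 \<omega>) \<partial>M) (outer x0) t))" for x0
    unfolding cond_cost_def stage_trace by (rule cond_repr[OF ng c c0 g0 g1 th])
  then have "cond_cost M eps \<gamma> A B1 B2 Q R1 R2 K1 K2 = (\<lambda>x0. \<Sum>t. \<gamma>^t * trace (?S ** lyrec ?N (\<integral>\<omega>. outer (eps 1 \<omega>) \<partial>M) (outer x0) t))"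
    by (rule ext)
  then show ?thesis
    unfolding init_cost_def by (simp only: init_repr[OF ng c c0 g0 g1 th])
qed

lemma gradK1:
  fixes eps :: "nat \<Rightarrow> 'a \<Rightarrow> real^'d" and A Q :: "real^'d^'d" and B1 B2 :: "real^'l^'d"
    and R1 R2 :: "real^'l^'l" and K1 K2 :: "real^'d^'l"
  assumes ng: "noise_good M eps" and g0: "0 \<le> \<gamma>" and g1: "\<gamma> < 1"
    and Qs: "transpose Q = Q" and R1s: "transpose R1 = R1" and R2s: "transpose R2 = R2"
    and th: "\<gamma> * (opnorm (clmat A B1 B2 K1 K2))^2 < 1"
  shows "((\<lambda>s. init_cost M eps \<gamma> A B1 B2 Q R1 R2 (K1 + s *\<^sub>R munit i k) K2) has_real_derivative
           (2 *\<^sub>R (Emat1 \<gamma> A B1 B2 Q R1 R2 K1 K2 ** Sigma_mat M eps \<gamma> (clmat A B1 B2 K1 K2))) $ i $ k) (at 0)"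
proof -
  define M0 where "M0 = A + B2 ** K2"
  define B where "B = - B1"
  define S0 where "S0 = Q - transpose K2 ** R2 ** K2"
  have cl: "\<And>K. clmat A B1 B2 K K2 = M0 + B ** K"
    by (simp add: clmat_def M0_def B_def mat_rneg algebra_simps)
  have Sf: "\<And>K. Q + transpose K ** R1 ** K - transpose K2 ** R2 ** K2 = S0 + transpose K ** R1 ** K"
    by (simp add: S0_def algebra_simps)
  have S0s: "transpose S0 = S0"
    by (simp add: S0_def transpose_diff matrix_transpose_mul Qs R2s matrix_mul_assoc)
  have th': "\<gamma> * (opnorm (M0 + B ** K1))^2 < 1" using th by (simp add: cl)
  have J: "init_cost M eps \<gamma> A B1 B2 Q R1 R2 (K1 + s *\<^sub>R munit i k) K2 =
       trace ((S0 + transpose (K1 + s *\<^sub>R munit i k) ** R1 ** (K1 + s *\<^sub>R munit i k)) ** Sigma_mat M eps \<gamma> (M0 + B ** (K1 + s *\<^sub>R munit i k)))"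
    if "\<gamma> * (opnorm (M0 + B ** (K1 + s *\<^sub>R munit i k)))^2 < 1" for s
    using init_cost_eq[OF ng g0 g1, of A B1 B2 "K1 + s *\<^sub>R munit i k" K2 Q R1 R2] that by (simp add: cl Sf)
  define P where "P = (THE P. P = (S0 + transpose K1 ** R1 ** K1) + \<gamma> *\<^sub>R (transpose (M0 + B ** K1) ** P ** (M0 + B ** K1)))"
  define X where "X = Sigma_mat M eps \<gamma> (M0 + B ** K1)"
  define E where "E = R1 ** K1 + \<gamma> *\<^sub>R (transpose B ** P ** (M0 + B ** K1))"
  note gg = grad_generic[OF ng g0 g1 R1s S0s th', where J="\<lambda>s. init_cost M eps \<gamma> A B1 B2 Q R1 R2 (K1 + s *\<^sub>R munit i k) K2" and U="munit i k", OF J]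
  have d: "((\<lambda>s. init_cost M eps \<gamma> A B1 B2 Q R1 R2 (K1 + s *\<^sub>R munit i k) K2) has_real_derivative
      trace ((transpose (munit i k) ** E + transpose E ** munit i k) ** X)) (at 0)"
    using gg(1) unfolding E_def P_def X_def .
  have Xs: "transpose X = X" using gg(2) unfolding X_def .
  have PP: "P = Pmat \<gamma> A B1 B2 Q R1 R2 K1 K2"
    unfolding P_def Pmat_def by (simp only: cl Sf)
  have EE: "E = Emat1 \<gamma> A B1 B2 Q R1 R2 K1 K2"
    unfolding E_def Emat1_def Let_def PP[symmetric] B_def M0_def
    by (simp add: mat_simps transpose_neg algebra_simps)
  have XX: "X = Sigma_mat M eps \<gamma> (clmat A B1 B2 K1 K2)" by (simp add: X_def cl)
  have tm: "trace ((transpose (munit i k) ** E + transpose E ** munit i k) ** X) = 2 * (E ** X) $ i $ k"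
    by (rule trace_munit[OF Xs])
  show ?thesis
    using d[unfolded tm] unfolding EE XX by simp
qed

lemma gradK2:
  fixes eps :: "nat \<Rightarrow> 'a \<Rightarrow> real^'d" and A Q :: "real^'d^'d" and B1 B2 :: "real^'l^'d"
    and R1 R2 :: "real^'l^'l" and K1 K2 :: "real^'d^'l"
  assumes ng: "noise_good M eps" and g0: "0 \<le> \<gamma>" and g1: "\<gamma> < 1"
    and Qs: "transpose Q = Q" and R1s: "transpose R1 = R1" and R2s: "transpose R2 = R2"
    and th: "\<gamma> * (opnorm (clmat A B1 B2 K1 K2))^2 < 1"
  shows "((\<lambda>s. init_cost M eps \<gamma> A B1 B2 Q R1 R2 K1 (K2 + s *\<^sub>R munit i k)) has_real_derivative
           (2 *\<^sub>R (Emat2 \<gamma> A B1 B2 Q R1 R2 K1 K2 ** Sigma_mat M eps \<gamma> (clmat A B1 B2 K1 K2))) $ i $ k) (at 0)"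
proof -
  define M0 where "M0 = A - B1 ** K1"
  define B where "B = B2"
  define R where "R = - R2"
  define S0 where "S0 = Q + transpose K1 ** R1 ** K1"
  have cl: "\<And>K. clmat A B1 B2 K1 K = M0 + B ** K"
    by (simp add: clmat_def M0_def B_def)
  have Sf: "\<And>K. Q + transpose K1 ** R1 ** K1 - transpose K ** R2 ** K = S0 + transpose K ** R ** K"
    by (simp add: S0_def R_def mat_rneg mat_lneg algebra_simps)
  have S0s: "transpose S0 = S0"
    by (simp add: S0_def transpose_add matrix_transpose_mul Qs R1s matrix_mul_assoc)
  have Rs: "transpose R = R" by (simp add: R_def transpose_neg R2s)
  have th': "\<gamma> * (opnorm (M0 + B ** K2))^2 < 1" using th by (simp add: cl)
  have J: "init_cost M eps \<gamma> A B1 B2 Q R1 R2 K1 (K2 + s *\<^sub>R munit i k) =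
       trace ((S0 + transpose (K2 + s *\<^sub>R munit i k) ** R ** (K2 + s *\<^sub>R munit i k)) ** Sigma_mat M eps \<gamma> (M0 + B ** (K2 + s *\<^sub>R munit i k)))"
    if "\<gamma> * (opnorm (M0 + B ** (K2 + s *\<^sub>R munit i k)))^2 < 1" for s
    using init_cost_eq[OF ng g0 g1, of A B1 B2 K1 "K2 + s *\<^sub>R munit i k" Q R1 R2] that by (simp add: cl Sf)
  define P where "P = (THE P. P = (S0 + transpose K2 ** R ** K2) + \<gamma> *\<^sub>R (transpose (M0 + B ** K2) ** P ** (M0 + B ** K2)))"
  define X where "X = Sigma_mat M eps \<gamma> (M0 + B ** K2)"
  define E where "E = R ** K2 + \<gamma> *\<^sub>R (transpose B ** P ** (M0 + B ** K2))"
  note gg = grad_generic[OF ng g0 g1 Rs S0s th', where J="\<lambda>s. init_cost M eps \<gamma> A B1 B2 Q R1 R2 K1 (K2 + s *\<^sub>R munit i k)" and U="munit i k", OF J]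
  have d: "((\<lambda>s. init_cost M eps \<gamma> A B1 B2 Q R1 R2 K1 (K2 + s *\<^sub>R munit i k)) has_real_derivative
      trace ((transpose (munit i k) ** E + transpose E ** munit i k) ** X)) (at 0)"
    using gg(1) unfolding E_def P_def X_def .
  have Xs: "transpose X = X" using gg(2) unfolding X_def .
  have PP: "P = Pmat \<gamma> A B1 B2 Q R1 R2 K1 K2"
    unfolding P_def Pmat_def by (simp only: cl Sf)
  have EE: "E = Emat2 \<gamma> A B1 B2 Q R1 R2 K1 K2"
    unfolding E_def Emat2_def Let_def PP[symmetric] B_def M0_def R_def
    by (simp add: mat_simps transpose_neg algebra_simps)
  have XX: "X = Sigma_mat M eps \<gamma> (clmat A B1 B2 K1 K2)" by (simp add: X_def cl)
  have tm: "trace ((transpose (munit i k) ** E + transpose E ** munit i k) ** X) = 2 * (E ** X) $ i $ k"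
    by (rule trace_munit[OF Xs])
  show ?thesis
    using d[unfolded tm] unfolding EE XX by simp
qed

theorem mainTheorem16:
  fixes M :: "'a measure"
    and eps1 eps0 :: "nat \<Rightarrow> 'a \<Rightarrow> real^'d"
    and \<gamma> :: real
    and A Ab Q Qb :: "real^'d^'d"
    and B1 B1b B2 B2b :: "real^'l^'d"
    and R1 R1b R2 R2b :: "real^'l^'l"
    and K1 L1 K2 L2 :: "real^'d^'l"
  assumes "0 \<le> \<gamma>" and "\<gamma> < 1"
    and "transpose Q = Q" and "transpose Qb = Qb"
    and "transpose R1 = R1" and "transpose R1b = R1b"
    and "transpose R2 = R2" and "transpose R2b = R2b"
    and "noise_ok M eps1 eps0"
    and "((K1, L1), (K2, L2)) \<in> Theta \<gamma> A Ab B1 B1b B2 B2b"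
  shows
    "is_matrix_gradient
       (\<lambda>K. total_cost M eps1 eps0 \<gamma> A Ab B1 B1b B2 B2b Q Qb R1 R1b R2 R2b (K, L1) (K2, L2)) K1
       (2 *\<^sub>R (Emat1 \<gamma> A B1 B2 Q R1 R2 K1 K2 ** Sigma_mat M eps1 \<gamma> (clmat A B1 B2 K1 K2)))
   \<and> is_matrix_gradient
       (\<lambda>K. total_cost M eps1 eps0 \<gamma> A Ab B1 B1b B2 B2b Q Qb R1 R1b R2 R2b (K1, L1) (K, L2)) K2
       (2 *\<^sub>R (Emat2 \<gamma> A B1 B2 Q R1 R2 K1 K2 ** Sigma_mat M eps1 \<gamma> (clmat A B1 B2 K1 K2)))
   \<and> is_matrix_gradient
       (\<lambda>L. total_cost M eps1 eps0 \<gamma> A Ab B1 B1b B2 B2b Q Qb R1 R1b R2 R2b (K1, L) (K2, L2)) L1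
       (2 *\<^sub>R (Emat1 \<gamma> (A + Ab) (B1 + B1b) (B2 + B2b) (Q + Qb) (R1 + R1b) (R2 + R2b) L1 L2
               ** Sigma_mat M eps0 \<gamma> (clmat (A + Ab) (B1 + B1b) (B2 + B2b) L1 L2)))
   \<and> is_matrix_gradient
       (\<lambda>L. total_cost M eps1 eps0 \<gamma> A Ab B1 B1b B2 B2b Q Qb R1 R1b R2 R2b (K1, L1) (K2, L)) L2
       (2 *\<^sub>R (Emat2 \<gamma> (A + Ab) (B1 + B1b) (B2 + B2b) (Q + Qb) (R1 + R1b) (R2 + R2b) L1 L2
               ** Sigma_mat M eps0 \<gamma> (clmat (A + Ab) (B1 + B1b) (B2 + B2b) L1 L2)))"
proof -
  note ng1 = noise_ok_good(1)[OF assms(9)] and ng0 = noise_ok_good(2)[OF assms(9)]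
  have th1: "\<gamma> * (opnorm (clmat A B1 B2 K1 K2))^2 < 1"
   and th0: "\<gamma> * (opnorm (clmat (A + Ab) (B1 + B1b) (B2 + B2b) L1 L2))^2 < 1"
    using assms(10) unfolding Theta_def by auto
  have s0: "transpose (Q + Qb) = Q + Qb" "transpose (R1 + R1b) = R1 + R1b" "transpose (R2 + R2b) = R2 + R2b"
    using assms(3-8) by (simp_all add: transpose_add)
  let ?I1 = "\<lambda>K1 K2. init_cost M eps1 \<gamma> A B1 B2 Q R1 R2 K1 K2"
  let ?I0 = "\<lambda>L1 L2. init_cost M eps0 \<gamma> (A + Ab) (B1 + B1b) (B2 + B2b) (Q + Qb) (R1 + R1b) (R2 + R2b) L1 L2"
  have tc: "total_cost M eps1 eps0 \<gamma> A Ab B1 B1b B2 B2b Q Qb R1 R1b R2 R2b (a, b) (c, d) = ?I1 a c + ?I0 b d" for a b c d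
    by (simp add: total_cost_def)
  show ?thesis
    unfolding is_matrix_gradient_def tc
  proof (intro conjI allI)
    fix i k
    show "((\<lambda>s. ?I1 (K1 + s *\<^sub>R munit i k) K2 + ?I0 L1 L2) has_real_derivative
       (2 *\<^sub>R (Emat1 \<gamma> A B1 B2 Q R1 R2 K1 K2 ** Sigma_mat M eps1 \<gamma> (clmat A B1 B2 K1 K2))) $ i $ k) (at 0)"
      using DERIV_add[OF gradK1[OF ng1 assms(1,2,3,5,7) th1] DERIV_const] by simp
    show "((\<lambda>s. ?I1 K1 (K2 + s *\<^sub>R munit i k) + ?I0 L1 L2) has_real_derivative
       (2 *\<^sub>R (Emat2 \<gamma> A B1 B2 Q R1 R2 K1 K2 ** Sigma_mat M eps1 \<gamma> (clmat A B1 B2 K1 K2))) $ i $ k) (at 0)"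
      using DERIV_add[OF gradK2[OF ng1 assms(1,2,3,5,7) th1] DERIV_const] by simp
    show "((\<lambda>s. ?I1 K1 K2 + ?I0 (L1 + s *\<^sub>R munit i k) L2) has_real_derivative
       (2 *\<^sub>R (Emat1 \<gamma> (A + Ab) (B1 + B1b) (B2 + B2b) (Q + Qb) (R1 + R1b) (R2 + R2b) L1 L2
               ** Sigma_mat M eps0 \<gamma> (clmat (A + Ab) (B1 + B1b) (B2 + B2b) L1 L2))) $ i $ k) (at 0)"
      using DERIV_add[OF DERIV_const gradK1[OF ng0 assms(1,2) s0 th0]] by simp
    show "((\<lambda>s. ?I1 K1 K2 + ?I0 L1 (L2 + s *\<^sub>R munit i k)) has_real_derivative
       (2 *\<^sub>R (Emat2 \<gamma> (A + Ab) (B1 + B1b) (B2 + B2b) (Q + Qb) (R1 + R1b) (R2 + R2b) L1 L2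
               ** Sigma_mat M eps0 \<gamma> (clmat (A + Ab) (B1 + B1b) (B2 + B2b) L1 L2))) $ i $ k) (at 0)"
      using DERIV_add[OF DERIV_const gradK2[OF ng0 assms(1,2) s0 th0]] by simp
  qed
qed


end
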